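(* In the setting below, $r_{\mathcal G}(t)/\sqrt{J_{\mathcal G}(t)}\to1$ as $t\nearrow T$.
   Context: Setting: let $d\in\{2,3\}$, $n\ge2$, masses $m_1,\dots,m_n>0$, and let $q(t)=(q_1(t),\dots,q_n(t))$, $q_i(t)\in\mathbb{R}^d$, be a solution on $[t_0,T)$ of $m_i\ddot q_i=\partial U/\partial q_i$, $U(q)=\sum_{i<j}m_im_j/|q_i-q_j|$, with $q_i(t)\ne q_j(t)$ for $i\ne j$, $t<T$, such that every limit $L_i=\lim_{t\nearrow T}q_i(t)$ exists. Let $\mathcal G\subset\{1,\dots,n\}$ be a cluster with at least two elements: $L_i=L_j=:L_{\mathcal G}$ for $i,j\in\mathcal G$ and $L_j\neq L_{\mathcal G}$ for $j\notin\mathcal G$. Notation: $c_{\mathcal G}=(\sum_{i\in\mathcal G}m_i)^{-1}\sum_{i\in\mathcal G}m_iq_i$, $J_{\mathcal G}=\sum_{i\in\mathcal G}m_i|q_i-L_i|^2$, $r_{\mathcal G}=\sqrt{\sum_{i\in\mathcal G}m_i|q_i-c_{\mathcal G}|^2}$. *)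

theory Defs
  imports "HOL-Analysis.Analysis"
begin

definition potential :: "nat \<Rightarrow> (nat \<Rightarrow> real) \<Rightarrow> (nat \<Rightarrow> real^'d) \<Rightarrow> real" where
  "potential n m x = (\<Sum>i<n. \<Sum>j\<in>{i<..<n}. m i * m j / norm (x i - x j))"

definition partial_grad_U ::
  "nat \<Rightarrow> (nat \<Rightarrow> real) \<Rightarrow> (nat \<Rightarrow> real^'d) \<Rightarrow> nat \<Rightarrow> real^'d \<Rightarrow> bool" where
  "partial_grad_U n m x i g \<longleftrightarrow>
     ((\<lambda>y. potential n m (x(i := y))) has_derivative (\<lambda>h. g \<bullet> h)) (at (x i))"

definition cluster_center :: "(nat \<Rightarrow> real) \<Rightarrow> nat set \<Rightarrow> (nat \<Rightarrow> real^'d) \<Rightarrow> real^'d" where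
  "cluster_center m G x = inverse (\<Sum>i\<in>G. m i) *\<^sub>R (\<Sum>i\<in>G. m i *\<^sub>R x i)"

definition cluster_J :: "(nat \<Rightarrow> real) \<Rightarrow> nat set \<Rightarrow> (nat \<Rightarrow> real^'d) \<Rightarrow> (nat \<Rightarrow> real^'d) \<Rightarrow> real" where
  "cluster_J m G L x = (\<Sum>i\<in>G. m i * (norm (x i - L i))\<^sup>2)"

definition cluster_r :: "(nat \<Rightarrow> real) \<Rightarrow> nat set \<Rightarrow> (nat \<Rightarrow> real^'d) \<Rightarrow> real" where
  "cluster_r m G x = sqrt (\<Sum>i\<in>G. m i * (norm (x i - cluster_center m G x))\<^sup>2)"

end

theory Submission
  imports Defs
begin

lemma hd_invnorm:
  fixes f :: "'a::real_normed_vector \<Rightarrow> 'b::real_inner"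
  assumes "(f has_derivative f') (at x within s)" "f x \<noteq> 0"
  shows "((\<lambda>x. 1 / norm (f x)) has_derivative (\<lambda>h. - (f x \<bullet> f' h) / norm (f x) ^ 3)) (at x within s)"
proof -
  have n: "((\<lambda>x. norm (f x)) has_derivative (\<lambda>h. f' h \<bullet> sgn (f x))) (at x within s)"
    using has_derivative_compose[OF assms(1) has_derivative_norm[OF assms(2)]] .
  have nz: "norm (f x) \<noteq> 0" using assms(2) by simp
  have "((\<lambda>x. inverse (norm (f x))) has_derivative
     (\<lambda>h. - (inverse (norm (f x)) * (f' h \<bullet> sgn (f x)) * inverse (norm (f x))))) (at x within s)"
    using Deriv.has_derivative_inverse[OF nz n] .
  moreover have "(\<lambda>h. - (inverse (norm (f x)) * (f' h \<bullet> sgn (f x)) * inverse (norm (f x))))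
     = (\<lambda>h. - (f x \<bullet> f' h) / norm (f x) ^ 3)"
    using nz by (auto simp: sgn_div_norm field_simps power3_eq_cube inner_commute)
  ultimately show ?thesis by (simp add: divide_inverse)
qed

lemma vd_inner:
  assumes "(f has_vector_derivative f') (at x within s)" "(g has_vector_derivative g') (at x within s)"
  shows "((\<lambda>x. f x \<bullet> g x) has_vector_derivative (f x \<bullet> g' + f' \<bullet> g x)) (at x within s)"
  using bounded_bilinear.has_vector_derivative[OF bounded_bilinear_inner assms] by simp

lemma vd_invnorm:
  fixes z :: "real \<Rightarrow> 'a::real_inner"
  assumes "(z has_vector_derivative z') (at x within s)" "z x \<noteq> 0"
  shows "((\<lambda>x. 1 / norm (z x)) has_vector_derivative (- (z x \<bullet> z') / norm (z x) ^ 3)) (at x within s)"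
proof -
  have "((\<lambda>x. 1 / norm (z x)) has_derivative (\<lambda>h. - (z x \<bullet> (h *\<^sub>R z')) / norm (z x) ^ 3)) (at x within s)"
    using hd_invnorm[OF assms(1)[unfolded has_vector_derivative_def] assms(2)] .
  then show ?thesis unfolding has_vector_derivative_def
    by (rule has_derivative_eq_rhs) (auto simp: field_simps)
qed

definition phi :: "'a::real_normed_vector \<Rightarrow> 'a" where "phi z = (1 / norm z ^ 3) *\<^sub>R z"

lemma phi_minus: "phi (- z) = - phi z" by (simp add: phi_def)
lemma phi_zero[simp]: "phi 0 = 0" by (simp add: phi_def)
lemma inner_phi: "(z::'a::real_inner) \<bullet> phi z = 1 / norm z"
proof -
  have "z \<bullet> z = norm z * norm z" by (simp add: dot_square_norm power2_eq_square)
  then show ?thesis by (cases "z = 0") (auto simp: phi_def power3_eq_cube)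
qed
lemma norm_phi: "norm (phi z) = 1 / norm z ^ 2"
  by (cases "z = 0") (auto simp: phi_def power3_eq_cube power2_eq_square)

lemma grad_potential:
  fixes x :: "nat \<Rightarrow> real^'d"
  assumes i: "i<n" and dist: "\<And>j. j<n \<Longrightarrow> j\<noteq>i \<Longrightarrow> x j \<noteq> x i"
  shows "((\<lambda>y. potential n m (x(i:=y))) has_derivative
     (\<lambda>h. (\<Sum>j<n. (m i * m j) *\<^sub>R phi (x j - x i)) \<bullet> h)) (at (x i))"
proof -
  define P where "P j = (m i * m j) *\<^sub>R phi (x j - x i)" for j
  define T where "T k l = (if k = i then P l else if l = i then P k else 0)" for k l
  have hterm: "((\<lambda>y. m k * m l / norm ((x(i:=y)) k - (x(i:=y)) l)) has_derivative (\<lambda>h. T k l \<bullet> h)) (at (x i))"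
    if "k<n" "l \<in> {k<..<n}" for k l
  proof (cases "k = i")
    case True
    then have li: "l \<noteq> i" "l < n" using that by auto
    have eq: "(\<lambda>y. m k * m l / norm ((x(i:=y)) k - (x(i:=y)) l)) = (\<lambda>y. (m k * m l) * (1 / norm (y - x l)))"
      using True li by auto
    have d: "((\<lambda>y. y - x l) has_derivative (\<lambda>h. h)) (at (x i))"
      by (auto intro!: derivative_eq_intros)
    have "((\<lambda>y. 1 / norm (y - x l)) has_derivative (\<lambda>h. - ((x i - x l) \<bullet> h) / norm (x i - x l)^3)) (at (x i))"
      using hd_invnorm[OF d] dist[OF li(2) li(1)] by auto
    then have "((\<lambda>y. (m k * m l) * (1 / norm (y - x l))) has_derivative
        (\<lambda>h. (m k * m l) * (- ((x i - x l) \<bullet> h) / norm (x i - x l)^3))) (at (x i))"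
      by (rule has_derivative_mult_right)
    then show ?thesis unfolding eq
      by (rule has_derivative_eq_rhs)
        (auto simp: T_def P_def True phi_def norm_minus_commute[of "x l"] inner_diff_left field_simps; simp add: diff_divide_distrib)
  next
    case False
    show ?thesis
    proof (cases "l = i")
      case True
      then have ki: "k \<noteq> i" "k < n" using that False by auto
      have eq: "(\<lambda>y. m k * m l / norm ((x(i:=y)) k - (x(i:=y)) l)) = (\<lambda>y. (m k * m l) * (1 / norm (y - x k)))"
        using True ki by (auto simp: norm_minus_commute)
      have d: "((\<lambda>y. y - x k) has_derivative (\<lambda>h. h)) (at (x i))"
        by (auto intro!: derivative_eq_intros)
      have "((\<lambda>y. 1 / norm (y - x k)) has_derivative (\<lambda>h. - ((x i - x k) \<bullet> h) / norm (x i - x k)^3)) (at (x i))"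
        using hd_invnorm[OF d] dist[OF ki(2) ki(1)] by auto
      then have "((\<lambda>y. (m k * m l) * (1 / norm (y - x k))) has_derivative
          (\<lambda>h. (m k * m l) * (- ((x i - x k) \<bullet> h) / norm (x i - x k)^3))) (at (x i))"
        by (rule has_derivative_mult_right)
      then show ?thesis unfolding eq
        by (rule has_derivative_eq_rhs)
          (auto simp: T_def P_def True False phi_def norm_minus_commute[of "x k"] inner_diff_left field_simps; simp add: diff_divide_distrib)
    next
      assume False2: "l \<noteq> i"
      have eq: "(\<lambda>y. m k * m l / norm ((x(i:=y)) k - (x(i:=y)) l)) = (\<lambda>y. m k * m l / norm (x k - x l))"
        using False False2 by auto
      show ?thesis unfolding eq by (auto simp: T_def False False2)
    qed
  qed
  have "((\<lambda>y. potential n m (x(i:=y))) has_derivative (\<lambda>h. \<Sum>k<n. \<Sum>l\<in>{k<..<n}. T k l \<bullet> h)) (at (x i))"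
    unfolding potential_def by (intro has_derivative_sum hterm) auto
  moreover have "(\<Sum>k<n. \<Sum>l\<in>{k<..<n}. T k l) = (\<Sum>j<n. P j)"
  proof -
    have "(\<Sum>k<n. \<Sum>l\<in>{k<..<n}. T k l) = (\<Sum>l\<in>{i<..<n}. T i l) + (\<Sum>k\<in>{..<n}-{i}. \<Sum>l\<in>{k<..<n}. T k l)"
      using i by (simp add: sum.remove)
    also have "(\<Sum>l\<in>{i<..<n}. T i l) = (\<Sum>l\<in>{i<..<n}. P l)" by (simp add: T_def)
    also have "(\<Sum>k\<in>{..<n}-{i}. \<Sum>l\<in>{k<..<n}. T k l) = (\<Sum>k\<in>{..<n}-{i}. if k < i then P k else 0)"
    proof (rule sum.cong[OF refl])
      fix k assume k: "k \<in> {..<n}-{i}"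
      have "(\<Sum>l\<in>{k<..<n}. T k l) = (\<Sum>l\<in>{k<..<n}. if l = i then P k else 0)"
        using k by (intro sum.cong) (auto simp: T_def)
      also have "\<dots> = (if k < i then P k else 0)" using i by (simp add: sum.delta')
      finally show "(\<Sum>l\<in>{k<..<n}. T k l) = (if k < i then P k else 0)" .
    qed
    also have "\<dots> = (\<Sum>k\<in>{..<i}. P k)"
    proof -
      have "(\<Sum>k\<in>{..<n}-{i}. if k < i then P k else 0) = (\<Sum>k\<in>{k\<in>{..<n}-{i}. k < i}. P k)"
        by (rule sum.inter_filter[symmetric]) simp
      also have "{k\<in>{..<n}-{i}. k < i} = {..<i}" using i by auto
      finally show ?thesis .
    qed
    also have "(\<Sum>j<n. P j) = (\<Sum>j\<in>{..<i}. P j) + (\<Sum>j\<in>{i..<n}. P j)"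
      using i by (metis atLeast0LessThan le0 less_imp_le_nat sum.atLeastLessThan_concat lessThan_atLeast0)
    moreover have "(\<Sum>j\<in>{i..<n}. P j) = P i + (\<Sum>j\<in>{i<..<n}. P j)"
      using i by (metis atLeastSucLessThan_greaterThanLessThan sum.atLeast_Suc_lessThan)
    moreover have "P i = 0" by (simp add: P_def)
    ultimately show ?thesis by simp
  qed
  ultimately show ?thesis unfolding P_def
    by (auto elim!: has_derivative_eq_rhs simp: inner_sum_left[symmetric])
qed



lemma sum_swap_G: "finite G \<Longrightarrow> (\<Sum>i\<in>G. \<Sum>j\<in>G. f i j) = (\<Sum>i\<in>G. \<Sum>j\<in>G. f j i)"
  by (rule sum.swap)

locale nb =
  fixes n :: nat and m :: "nat \<Rightarrow> real" and q :: "real \<Rightarrow> nat \<Rightarrow> real^'d"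
    and v a :: "real \<Rightarrow> nat \<Rightarrow> real^'d" and L :: "nat \<Rightarrow> real^'d"
    and t0 T :: real and G :: "nat set" and LG :: "real^'d"
  assumes mpos: "\<And>i. i < n \<Longrightarrow> m i > 0"
    and t0T: "t0 < T"
    and vel: "\<And>i t. i < n \<Longrightarrow> t \<in> {t0..<T} \<Longrightarrow>
                 ((\<lambda>s. q s i) has_vector_derivative v t i) (at t within {t0..<T})"
    and acc: "\<And>i t. i < n \<Longrightarrow> t \<in> {t0..<T} \<Longrightarrow>
                 ((\<lambda>s. v s i) has_vector_derivative a t i) (at t within {t0..<T})"
    and newton: "\<And>i t. i < n \<Longrightarrow> t \<in> {t0..<T} \<Longrightarrow>
                 partial_grad_U n m (q t) i (m i *\<^sub>R a t i)"
    and nocoll: "\<And>i j t. i < n \<Longrightarrow> j < n \<Longrightarrow> i \<noteq> j \<Longrightarrow> t \<in> {t0..<T} \<Longrightarrow> q t i \<noteq> q t j"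
    and lim: "\<And>i. i < n \<Longrightarrow> ((\<lambda>t. q t i) \<longlongrightarrow> L i) (at_left T)"
    and Gsub: "G \<subseteq> {..<n}" and Gcard: "card G \<ge> 2"
    and Gin: "\<And>i. i \<in> G \<Longrightarrow> L i = LG"
    and Gout: "\<And>j. j < n \<Longrightarrow> j \<notin> G \<Longrightarrow> L j \<noteq> LG"
begin

definition "M = sum m G"
definition "c t = cluster_center m G (q t)"
definition "cv t = inverse M *\<^sub>R (\<Sum>i\<in>G. m i *\<^sub>R v t i)"
definition "ca t = inverse M *\<^sub>R (\<Sum>i\<in>G. m i *\<^sub>R a t i)"
definition "x t i = q t i - c t"
definition "w t i = v t i - cv t"
definition "F t i j = (m i * m j) *\<^sub>R phi (q t j - q t i)"
definition "Fint t i = (\<Sum>j\<in>G. F t i j)"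
definition "Fext t i = (\<Sum>j\<in>{..<n}-G. F t i j)"
definition "II t = (\<Sum>i\<in>G. m i * (x t i \<bullet> x t i))"
definition "DD t = 2 * (\<Sum>i\<in>G. m i * (x t i \<bullet> w t i))"
definition "KK t = (\<Sum>i\<in>G. m i * (w t i \<bullet> w t i)) / 2"
definition "UU t = (\<Sum>i\<in>G. \<Sum>j\<in>G. m i * m j / norm (q t i - q t j)) / 2"
definition "EE t = KK t - UU t"
definition "ee t = 2 * (\<Sum>i\<in>G. x t i \<bullet> Fext t i)"

lemma finG: "finite G" using Gsub finite_subset by blast
lemma mG: "i \<in> G \<Longrightarrow> m i > 0" using Gsub mpos by auto
lemma Mpos: "M > 0"
proof -
  have "G \<noteq> {}" using Gcard by auto
  then show ?thesis unfolding M_def using finG mG by (intro sum_pos) auto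
qed

lemma c_eq: "c t = inverse M *\<^sub>R (\<Sum>i\<in>G. m i *\<^sub>R q t i)"
  by (simp add: c_def cluster_center_def M_def)

lemma newton_full:
  assumes i: "i < n" and t: "t \<in> {t0..<T}"
  shows "m i *\<^sub>R a t i = (\<Sum>j<n. F t i j)"
proof -
  have d1: "((\<lambda>y. potential n m ((q t)(i:=y))) has_derivative (\<lambda>h. (m i *\<^sub>R a t i) \<bullet> h)) (at (q t i))"
    using newton[OF i t] unfolding partial_grad_U_def .
  have d2: "((\<lambda>y. potential n m ((q t)(i:=y))) has_derivative
     (\<lambda>h. (\<Sum>j<n. (m i * m j) *\<^sub>R phi (q t j - q t i)) \<bullet> h)) (at (q t i))"
    by (rule grad_potential[OF i]) (use nocoll[OF _ i _ t] in auto)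
  have "(\<lambda>h. (m i *\<^sub>R a t i) \<bullet> h) = (\<lambda>h. (\<Sum>j<n. F t i j) \<bullet> h)"
    using has_derivative_unique[OF d1 d2] by (simp add: F_def)
  then have "(m i *\<^sub>R a t i - (\<Sum>j<n. F t i j)) \<bullet> (m i *\<^sub>R a t i - (\<Sum>j<n. F t i j)) = 0"
    by (metis (no_types) inner_diff_left right_minus_eq)
  then show ?thesis by simp
qed

lemma newton_G:
  assumes i: "i \<in> G" and t: "t \<in> {t0..<T}"
  shows "m i *\<^sub>R a t i = Fint t i + Fext t i"
proof -
  have "i < n" using i Gsub by auto
  have "(\<Sum>j<n. F t i j) = (\<Sum>j\<in>G. F t i j) + (\<Sum>j\<in>{..<n}-G. F t i j)"
    using Gsub by (metis finite_lessThan sum.subset_diff add.commute)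
  then show ?thesis using newton_full[OF \<open>i<n\<close> t] by (simp add: Fint_def Fext_def)
qed

lemma F_anti: "F t j i = - F t i j"
proof -
  have "q t i - q t j = - (q t j - q t i)" by simp
  then show ?thesis unfolding F_def by (simp only: phi_minus) (simp add: mult.commute)
qed

lemma sum_Fint: "(\<Sum>i\<in>G. Fint t i) = 0"
proof -
  have "(\<Sum>i\<in>G. Fint t i) = (\<Sum>i\<in>G. \<Sum>j\<in>G. F t j i)"
    unfolding Fint_def by (rule sum.swap)
  also have "\<dots> = (\<Sum>i\<in>G. \<Sum>j\<in>G. - F t i j)" by (intro sum.cong refl) (rule F_anti)
  also have "\<dots> = - (\<Sum>i\<in>G. Fint t i)" by (simp add: Fint_def sum_negf)
  finally have h: "(\<Sum>i\<in>G. Fint t i) = - (\<Sum>i\<in>G. Fint t i)" .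
  then have "(2::real) *\<^sub>R (\<Sum>i\<in>G. Fint t i) = 0" by (metis add.right_inverse scaleR_2)
  then show ?thesis by simp
qed

lemma sum_mx: "(\<Sum>i\<in>G. m i *\<^sub>R x t i) = 0"
proof -
  have "(\<Sum>i\<in>G. m i *\<^sub>R x t i) = (\<Sum>i\<in>G. m i *\<^sub>R q t i) - M *\<^sub>R c t"
    by (simp add: x_def scaleR_diff_right sum_subtractf M_def scaleR_sum_left)
  also have "M *\<^sub>R c t = (\<Sum>i\<in>G. m i *\<^sub>R q t i)" using Mpos by (simp add: c_eq)
  finally show ?thesis by simp
qed

lemma sum_mw: "(\<Sum>i\<in>G. m i *\<^sub>R w t i) = 0"
proof -
  have "(\<Sum>i\<in>G. m i *\<^sub>R w t i) = (\<Sum>i\<in>G. m i *\<^sub>R v t i) - M *\<^sub>R cv t"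
    by (simp add: w_def scaleR_diff_right sum_subtractf M_def scaleR_sum_left)
  also have "M *\<^sub>R cv t = (\<Sum>i\<in>G. m i *\<^sub>R v t i)" using Mpos by (simp add: cv_def)
  finally show ?thesis by simp
qed

lemma sum_inner_zero:
  assumes "(\<Sum>i\<in>G. m i *\<^sub>R y i) = 0"
  shows "(\<Sum>i\<in>G. m i * (y i \<bullet> z)) = 0"
proof -
  have "(\<Sum>i\<in>G. m i * (y i \<bullet> z)) = (\<Sum>i\<in>G. m i *\<^sub>R y i) \<bullet> z"
    by (simp add: inner_sum_left)
  then show ?thesis using assms by simp
qed

lemma xFint: "(\<Sum>i\<in>G. x t i \<bullet> Fint t i) = - UU t"
proof -
  have "(\<Sum>i\<in>G. x t i \<bullet> Fint t i) = (\<Sum>i\<in>G. q t i \<bullet> Fint t i) - c t \<bullet> (\<Sum>i\<in>G. Fint t i)"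
    by (simp add: x_def inner_diff_left sum_subtractf inner_sum_right)
  also have "\<dots> = (\<Sum>i\<in>G. q t i \<bullet> Fint t i)" by (simp add: sum_Fint)
  also have "\<dots> = (\<Sum>i\<in>G. \<Sum>j\<in>G. q t i \<bullet> F t i j)" by (simp add: Fint_def inner_sum_right)
  finally have A: "(\<Sum>i\<in>G. x t i \<bullet> Fint t i) = (\<Sum>i\<in>G. \<Sum>j\<in>G. q t i \<bullet> F t i j)" .
  have B: "(\<Sum>i\<in>G. \<Sum>j\<in>G. q t i \<bullet> F t i j) = - (\<Sum>i\<in>G. \<Sum>j\<in>G. q t j \<bullet> F t i j)"
  proof -
    have "(\<Sum>i\<in>G. \<Sum>j\<in>G. q t i \<bullet> F t i j) = (\<Sum>i\<in>G. \<Sum>j\<in>G. q t j \<bullet> F t j i)" by (rule sum.swap)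
    also have "\<dots> = (\<Sum>i\<in>G. \<Sum>j\<in>G. - (q t j \<bullet> F t i j))" by (intro sum.cong refl) (subst F_anti, simp)
    also have "\<dots> = - (\<Sum>i\<in>G. \<Sum>j\<in>G. q t j \<bullet> F t i j)" by (simp add: sum_negf)
    finally show ?thesis .
  qed
  have C: "(\<Sum>i\<in>G. \<Sum>j\<in>G. q t i \<bullet> F t i j) - (\<Sum>i\<in>G. \<Sum>j\<in>G. q t j \<bullet> F t i j)
      = - (\<Sum>i\<in>G. \<Sum>j\<in>G. m i * m j / norm (q t i - q t j))"
  proof -
    have "(\<Sum>i\<in>G. \<Sum>j\<in>G. q t i \<bullet> F t i j) - (\<Sum>i\<in>G. \<Sum>j\<in>G. q t j \<bullet> F t i j)
        = (\<Sum>i\<in>G. \<Sum>j\<in>G. (q t i - q t j) \<bullet> F t i j)"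
      by (simp add: sum_subtractf inner_diff_left)
    also have "\<dots> = (\<Sum>i\<in>G. \<Sum>j\<in>G. - (m i * m j / norm (q t i - q t j)))"
    proof (intro sum.cong refl)
      fix i j
      have "(q t i - q t j) \<bullet> F t i j = - (m i * m j) * ((q t j - q t i) \<bullet> phi (q t j - q t i))"
        unfolding F_def by (simp add: inner_diff_left inner_diff_right algebra_simps)
      also have "\<dots> = - (m i * m j / norm (q t i - q t j))"
        by (simp add: inner_phi norm_minus_commute)
      finally show "(q t i - q t j) \<bullet> F t i j = - (m i * m j / norm (q t i - q t j))" .
    qed
    finally show ?thesis by (simp add: sum_negf)
  qed
  show ?thesis using A B C by (simp add: UU_def)
qed

end


lemma vd_cscale: "(f has_vector_derivative f') F \<Longrightarrow> ((\<lambda>x. c *\<^sub>R f x) has_vector_derivative c *\<^sub>R f') F"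
  by (rule bounded_linear.has_vector_derivative[OF bounded_linear_scaleR_right])

context nb begin

definition "DDd t = 4 * KK t - 2 * UU t + ee t"

lemma d_q: "i \<in> G \<Longrightarrow> t \<in> {t0..<T} \<Longrightarrow> ((\<lambda>s. q s i) has_vector_derivative v t i) (at t within {t0..<T})"
  using vel Gsub by auto
lemma d_v: "i \<in> G \<Longrightarrow> t \<in> {t0..<T} \<Longrightarrow> ((\<lambda>s. v s i) has_vector_derivative a t i) (at t within {t0..<T})"
  using acc Gsub by auto

lemma d_c: assumes t: "t \<in> {t0..<T}" shows "(c has_vector_derivative cv t) (at t within {t0..<T})"
proof -
  have e: "c = (\<lambda>s. inverse M *\<^sub>R (\<Sum>i\<in>G. m i *\<^sub>R q s i))" by (rule ext) (simp add: c_eq)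
  show ?thesis unfolding e cv_def
    by (intro vd_cscale has_vector_derivative_sum d_q t)
qed

lemma d_cv: assumes t: "t \<in> {t0..<T}" shows "(cv has_vector_derivative ca t) (at t within {t0..<T})"
proof -
  have e: "cv = (\<lambda>s. inverse M *\<^sub>R (\<Sum>i\<in>G. m i *\<^sub>R v s i))" by (rule ext) (simp add: cv_def)
  show ?thesis unfolding e ca_def
    by (intro vd_cscale has_vector_derivative_sum d_v t)
qed

lemma d_x: "i \<in> G \<Longrightarrow> t \<in> {t0..<T} \<Longrightarrow> ((\<lambda>s. x s i) has_vector_derivative w t i) (at t within {t0..<T})"
  unfolding x_def w_def by (intro has_vector_derivative_diff d_q d_c)

lemma d_w: "i \<in> G \<Longrightarrow> t \<in> {t0..<T} \<Longrightarrow> ((\<lambda>s. w s i) has_vector_derivative (a t i - ca t)) (at t within {t0..<T})"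
  unfolding w_def by (intro has_vector_derivative_diff d_v d_cv)

lemma d_II: assumes t: "t \<in> {t0..<T}" shows "(II has_vector_derivative DD t) (at t within {t0..<T})"
proof -
  have "((\<lambda>s. \<Sum>i\<in>G. m i * (x s i \<bullet> x s i)) has_vector_derivative
      (\<Sum>i\<in>G. m i * (x t i \<bullet> w t i + w t i \<bullet> x t i))) (at t within {t0..<T})"
    by (intro has_vector_derivative_sum has_vector_derivative_mult_right vd_inner d_x t)
  then show ?thesis unfolding II_def[abs_def] DD_def
    by (rule has_vector_derivative_eq_rhs) (simp add: inner_commute sum_distrib_left algebra_simps)
qed

lemma d_DD: assumes t: "t \<in> {t0..<T}" shows "(DD has_vector_derivative DDd t) (at t within {t0..<T})"
proof -
  have "((\<lambda>s. 2 * (\<Sum>i\<in>G. m i * (x s i \<bullet> w s i))) has_vector_derivative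
      2 * (\<Sum>i\<in>G. m i * (x t i \<bullet> (a t i - ca t) + w t i \<bullet> w t i))) (at t within {t0..<T})"
    by (intro has_vector_derivative_mult_right has_vector_derivative_sum vd_inner d_x d_w t)
  moreover have "2 * (\<Sum>i\<in>G. m i * (x t i \<bullet> (a t i - ca t) + w t i \<bullet> w t i)) = DDd t"
  proof -
    have "(\<Sum>i\<in>G. m i * (x t i \<bullet> (a t i - ca t) + w t i \<bullet> w t i))
       = (\<Sum>i\<in>G. x t i \<bullet> (m i *\<^sub>R a t i)) - (\<Sum>i\<in>G. m i * (x t i \<bullet> ca t)) + (\<Sum>i\<in>G. m i * (w t i \<bullet> w t i))"
      by (simp add: inner_diff_right algebra_simps sum.distrib sum_subtractf)
    also have "(\<Sum>i\<in>G. m i * (x t i \<bullet> ca t)) = 0" by (rule sum_inner_zero[OF sum_mx])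
    also have "(\<Sum>i\<in>G. x t i \<bullet> (m i *\<^sub>R a t i)) = (\<Sum>i\<in>G. x t i \<bullet> Fint t i) + (\<Sum>i\<in>G. x t i \<bullet> Fext t i)"
      using newton_G[OF _ t] by (simp add: inner_add_right sum.distrib)
    finally show ?thesis using xFint[of t] by (simp add: DDd_def KK_def ee_def)
  qed
  ultimately show ?thesis unfolding DD_def[abs_def] by simp
qed

lemma d_KK: assumes t: "t \<in> {t0..<T}"
  shows "(KK has_vector_derivative ((\<Sum>i\<in>G. w t i \<bullet> Fint t i) + (\<Sum>i\<in>G. w t i \<bullet> Fext t i))) (at t within {t0..<T})"
proof -
  have "((\<lambda>s. (\<Sum>i\<in>G. m i * (w s i \<bullet> w s i)) / 2) has_vector_derivative
      (\<Sum>i\<in>G. m i * (w t i \<bullet> (a t i - ca t) + (a t i - ca t) \<bullet> w t i)) / 2) (at t within {t0..<T})"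
    by (intro has_vector_derivative_divide has_vector_derivative_sum has_vector_derivative_mult_right vd_inner d_w t)
  moreover have "(\<Sum>i\<in>G. m i * (w t i \<bullet> (a t i - ca t) + (a t i - ca t) \<bullet> w t i)) / 2
      = (\<Sum>i\<in>G. w t i \<bullet> Fint t i) + (\<Sum>i\<in>G. w t i \<bullet> Fext t i)"
  proof -
    have "(\<Sum>i\<in>G. m i * (w t i \<bullet> (a t i - ca t) + (a t i - ca t) \<bullet> w t i))
       = (\<Sum>i\<in>G. 2 * (w t i \<bullet> (m i *\<^sub>R a t i) - m i * (w t i \<bullet> ca t)))"
      by (intro sum.cong refl) (simp add: inner_diff_right inner_diff_left inner_commute algebra_simps)
    also have "\<dots> = 2 * ((\<Sum>i\<in>G. w t i \<bullet> (m i *\<^sub>R a t i)) - (\<Sum>i\<in>G. m i * (w t i \<bullet> ca t)))"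
      by (simp add: sum_distrib_left sum_subtractf)
    finally have "(\<Sum>i\<in>G. m i * (w t i \<bullet> (a t i - ca t) + (a t i - ca t) \<bullet> w t i)) / 2
       = (\<Sum>i\<in>G. w t i \<bullet> (m i *\<^sub>R a t i)) - (\<Sum>i\<in>G. m i * (w t i \<bullet> ca t))" by simp
    also have "(\<Sum>i\<in>G. m i * (w t i \<bullet> ca t)) = 0" by (rule sum_inner_zero[OF sum_mw])
    also have "(\<Sum>i\<in>G. w t i \<bullet> (m i *\<^sub>R a t i)) = (\<Sum>i\<in>G. w t i \<bullet> Fint t i) + (\<Sum>i\<in>G. w t i \<bullet> Fext t i)"
      using newton_G[OF _ t] by (simp add: inner_add_right sum.distrib)
    finally show ?thesis by simp
  qed
  ultimately show ?thesis unfolding KK_def[abs_def] by simp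
qed

lemma d_UU: assumes t: "t \<in> {t0..<T}"
  shows "(UU has_vector_derivative (\<Sum>i\<in>G. w t i \<bullet> Fint t i)) (at t within {t0..<T})"
proof -
  define D where "D i j = (m i * m j) * (- ((q t i - q t j) \<bullet> (v t i - v t j)) / norm (q t i - q t j) ^ 3)" for i j
  have term1: "((\<lambda>s. m i * m j / norm (q s i - q s j)) has_vector_derivative D i j) (at t within {t0..<T})"
    if "i \<in> G" "j \<in> G" for i j
  proof (cases "i = j")
    case True
    then show ?thesis by (simp add: D_def)
  next
    case False
    have nz: "q t i - q t j \<noteq> 0" using nocoll[OF _ _ False t] that Gsub by auto
    have "((\<lambda>s. 1 / norm (q s i - q s j)) has_vector_derivative
        - ((q t i - q t j) \<bullet> (v t i - v t j)) / norm (q t i - q t j) ^ 3) (at t within {t0..<T})"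
      by (rule vd_invnorm[OF has_vector_derivative_diff[OF d_q d_q] nz]) (use that t in auto)
    then have "((\<lambda>s. (m i * m j) * (1 / norm (q s i - q s j))) has_vector_derivative D i j) (at t within {t0..<T})"
      unfolding D_def by (rule has_vector_derivative_mult_right)
    then show ?thesis by simp
  qed
  have "(UU has_vector_derivative (\<Sum>i\<in>G. \<Sum>j\<in>G. D i j) / 2) (at t within {t0..<T})"
    unfolding UU_def[abs_def]
    by (intro has_vector_derivative_divide has_vector_derivative_sum term1)
  moreover have "(\<Sum>i\<in>G. \<Sum>j\<in>G. D i j) / 2 = (\<Sum>i\<in>G. w t i \<bullet> Fint t i)"
  proof -
    define B where "B i j = v t i \<bullet> F t i j" for i j
    have "D i j = B i j + B j i" for i j
    proof -
      define k where "k = 1 / norm (q t i - q t j) ^ 3"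
      have Bij: "B i j = m i * m j * k * (v t i \<bullet> (q t j - q t i))"
        by (simp add: B_def F_def phi_def k_def norm_minus_commute)
      have Bji: "B j i = m i * m j * k * (v t j \<bullet> (q t i - q t j))"
        by (simp add: B_def F_def phi_def k_def)
      have Dij: "D i j = - (m i * m j * k * ((q t i - q t j) \<bullet> (v t i - v t j)))"
        by (simp add: D_def k_def)
      show ?thesis by (simp add: Bij Bji Dij inner_diff_left inner_diff_right inner_commute algebra_simps)
    qed
    then have "(\<Sum>i\<in>G. \<Sum>j\<in>G. D i j) = (\<Sum>i\<in>G. \<Sum>j\<in>G. B i j) + (\<Sum>i\<in>G. \<Sum>j\<in>G. B j i)"
      by (simp add: sum.distrib)
    also have "(\<Sum>i\<in>G. \<Sum>j\<in>G. B j i) = (\<Sum>i\<in>G. \<Sum>j\<in>G. B i j)" by (rule sum.swap)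
    finally have "(\<Sum>i\<in>G. \<Sum>j\<in>G. D i j) / 2 = (\<Sum>i\<in>G. v t i \<bullet> Fint t i)"
      by (simp add: B_def Fint_def inner_sum_right)
    also have "\<dots> = (\<Sum>i\<in>G. w t i \<bullet> Fint t i) + cv t \<bullet> (\<Sum>i\<in>G. Fint t i)"
      by (simp add: w_def inner_diff_left sum_subtractf inner_sum_right)
    finally show ?thesis by (simp add: sum_Fint)
  qed
  ultimately show ?thesis by simp
qed

lemma d_EE: assumes t: "t \<in> {t0..<T}"
  shows "(EE has_vector_derivative (\<Sum>i\<in>G. w t i \<bullet> Fext t i)) (at t within {t0..<T})"
proof -
  have "((\<lambda>s. KK s - UU s) has_vector_derivative
     ((\<Sum>i\<in>G. w t i \<bullet> Fint t i) + (\<Sum>i\<in>G. w t i \<bullet> Fext t i)) - (\<Sum>i\<in>G. w t i \<bullet> Fint t i)) (at t within {t0..<T})"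
    by (intro has_vector_derivative_diff d_KK d_UU t)
  then show ?thesis unfolding EE_def[abs_def] by simp
qed

end


lemma mvt_real:
  fixes f f' :: "real \<Rightarrow> real"
  assumes "a \<le> b" "\<And>s. s \<in> {a..b} \<Longrightarrow> (f has_real_derivative f' s) (at s within {a..b})"
  shows "\<exists>\<xi>\<in>{a..b}. f b - f a = f' \<xi> * (b - a)"
proof -
  have "\<exists>\<xi>\<in>{a..b}. f b - f a = (\<lambda>h. f' \<xi> * h) (b - a)"
    by (rule mvt_very_simple[OF assms(1)]) (use assms(2) in \<open>auto simp: has_field_derivative_def\<close>)
  then show ?thesis by auto
qed

lemma deriv_sub:
  "(f has_real_derivative d) (at s within A) \<Longrightarrow> B \<subseteq> A \<Longrightarrow> (f has_real_derivative d) (at s within B)"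
  by (rule DERIV_subset)

lemma gron:
  fixes f f' b :: "real \<Rightarrow> real"
  assumes t1T: "t1 < T"
    and der: "\<And>t. t \<in> {t1..<T} \<Longrightarrow> (f has_real_derivative f' t) (at t within {t1..<T})"
    and ineq: "\<And>t. t \<in> {t1..<T} \<Longrightarrow> f' t \<ge> -a + b t * f t"
    and b0: "\<And>t. t \<in> {t1..<T} \<Longrightarrow> 0 \<le> b t" and bB: "\<And>t. t \<in> {t1..<T} \<Longrightarrow> b t \<le> \<beta>"
    and small: "\<beta> * (T - t1) \<le> 1/2" and a0: "a \<ge> 0"
    and t: "t \<in> {t1..<T}"
  shows "f t \<ge> min 0 (2 * (f t1 - a * (T - t1)))"
proof -
  have sub: "{t1..t} \<subseteq> {t1..<T}" using t by auto
  have derT: "(f has_real_derivative f' s) (at s within {t1..t})" if "s \<in> {t1..t}" for s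
    using deriv_sub[OF der sub] that sub by auto
  have cont: "continuous_on {t1..t} f" by (rule DERIV_continuous_on[OF derT])
  obtain u0 where u0: "u0 \<in> {t1..t}" and mn: "\<And>s. s \<in> {t1..t} \<Longrightarrow> f u0 \<le> f s"
    using continuous_attains_inf[OF compact_Icc _ cont] t by auto
  show ?thesis
  proof (cases "f u0 \<ge> 0")
    case True then show ?thesis using mn[of t] t by auto
  next
    case False
    have derU: "(f has_real_derivative f' s) (at s within {t1..u0})" if "s \<in> {t1..u0}" for s
      using that u0 t by (intro deriv_sub[OF der]) auto
    obtain \<xi> where xi: "\<xi> \<in> {t1..u0}" and eq: "f u0 - f t1 = f' \<xi> * (u0 - t1)"
      using mvt_real[OF _ derU] u0 by auto
    have xiS: "\<xi> \<in> {t1..<T}" using xi u0 t by auto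
    have "f \<xi> \<ge> f u0" using mn xi u0 by auto
    then have "b \<xi> * f \<xi> \<ge> b \<xi> * f u0" using b0[OF xiS] by (simp add: mult_left_mono)
    moreover have "b \<xi> * f u0 \<ge> \<beta> * f u0" using bB[OF xiS] False by (simp add: mult_right_mono_neg)
    ultimately have fx: "f' \<xi> \<ge> -a + \<beta> * f u0" using ineq[OF xiS] by linarith
    have nonpos: "-a + \<beta> * f u0 \<le> 0"
    proof -
      have "\<beta> \<ge> 0" using b0[of t1] bB[of t1] t1T by auto
      then have "\<beta> * f u0 \<le> 0" using False by (simp add: mult_nonneg_nonpos)
      then show ?thesis using a0 by linarith
    qed
    have d: "0 \<le> u0 - t1" "u0 - t1 \<le> T - t1" using u0 t by auto
    have "f' \<xi> * (u0 - t1) \<ge> (-a + \<beta> * f u0) * (u0 - t1)" using fx d by (simp add: mult_right_mono)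
    moreover have "(-a + \<beta> * f u0) * (u0 - t1) \<ge> (-a + \<beta> * f u0) * (T - t1)"
      using nonpos d by (simp add: mult_left_mono_neg)
    ultimately have "f u0 \<ge> f t1 + (-a + \<beta> * f u0) * (T - t1)" using eq by linarith
    moreover have "\<beta> * f u0 * (T - t1) \<ge> f u0 / 2"
    proof -
      have "\<beta> * (T - t1) * f u0 \<ge> (1/2) * f u0" by (rule mult_right_mono_neg) (use small False in auto)
      then show ?thesis by (simp add: algebra_simps)
    qed
    ultimately have "f u0 \<ge> 2 * (f t1 - a * (T - t1))" by (simp add: algebra_simps)
    then show ?thesis using mn[of t] t by auto
  qed
qed



lemma convex_lower:
  fixes I D Dd :: "real \<Rightarrow> real"
  assumes t2T: "t2 < T"
    and dI: "\<And>s. s \<in> {t2..<T} \<Longrightarrow> (I has_real_derivative D s) (at s within {t2..<T})"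
    and dD: "\<And>s. s \<in> {t2..<T} \<Longrightarrow> (D has_real_derivative Dd s) (at s within {t2..<T})"
    and Dd: "\<And>s. s \<in> {t2..<T} \<Longrightarrow> Dd s \<ge> 2 * A" and A0: "A \<ge> 0"
    and I0: "\<And>s. s \<in> {t2..<T} \<Longrightarrow> I s \<ge> 0" and Ilim: "(I \<longlongrightarrow> 0) (at_left T)"
    and t: "t \<in> {t2..<T}"
  shows "I t \<ge> A * (T - t)^2"
proof -
  have nb: "at_left T \<noteq> bot" by (simp add: trivial_limit_at_left_real)
  have Dinc: "D u - D s \<ge> 2 * A * (u - s)" if "s \<in> {t2..<T}" "u \<in> {s..<T}" for s u
  proof -
    have dr: "(D has_real_derivative Dd r) (at r within {s..u})" if "r \<in> {s..u}" for r
      using that \<open>s \<in> _\<close> \<open>u \<in> _\<close> by (intro deriv_sub[OF dD]) auto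
    have "\<exists>\<xi>\<in>{s..u}. D u - D s = Dd \<xi> * (u - s)"
      by (rule mvt_real[OF _ dr]) (use that in auto)
    then obtain \<xi> where xi: "\<xi> \<in> {s..u}" "D u - D s = Dd \<xi> * (u - s)" by auto
    have "Dd \<xi> \<ge> 2 * A" using Dd[of \<xi>] xi that by auto
    then show ?thesis using xi that by (simp add: mult_right_mono)
  qed
  have Dneg: "D s \<le> 0" if s: "s \<in> {t2..<T}" for s
  proof (rule ccontr)
    assume pos: "\<not> D s \<le> 0"
    have ev: "eventually (\<lambda>u. D s * (u - s) \<le> I u) (at_left T)"
    proof -
      have "eventually (\<lambda>u. u \<in> {s<..<T}) (at_left T)" using s by (intro eventually_at_left_real) auto
      then show ?thesis
      proof (rule eventually_mono)
        fix u assume u: "u \<in> {s<..<T}"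
        have "(I has_real_derivative D r) (at r within {s..u})" if "r \<in> {s..u}" for r
          using that s u by (intro deriv_sub[OF dI]) auto
        then obtain \<xi> where xi: "\<xi> \<in> {s..u}" "I u - I s = D \<xi> * (u - s)"
          using mvt_real[of s u I D] u by auto
        have "D \<xi> - D s \<ge> 2 * A * (\<xi> - s)" using Dinc[of s \<xi>] s xi u by auto
        moreover have "2 * A * (\<xi> - s) \<ge> 0" using A0 xi by auto
        ultimately have "D \<xi> \<ge> D s" by linarith
        then have "D \<xi> * (u - s) \<ge> D s * (u - s)" using u by (simp add: mult_right_mono)
        then show "D s * (u - s) \<le> I u" using xi I0[OF s] by linarith
      qed
    qed
    have "((\<lambda>u. D s * (u - s)) \<longlongrightarrow> D s * (T - s)) (at_left T)"
      by (intro tendsto_intros)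
    from tendsto_le[OF nb Ilim this ev] have "D s * (T - s) \<le> 0" .
    moreover have "D s * (T - s) > 0" using pos s by auto
    ultimately show False by simp
  qed
  have Dbound: "D s \<le> -2 * A * (T - s)" if s: "s \<in> {t2..<T}" for s
  proof -
    have ev: "eventually (\<lambda>u. D s \<le> -2 * A * (u - s)) (at_left T)"
    proof -
      have "eventually (\<lambda>u. u \<in> {s<..<T}) (at_left T)" using s by (intro eventually_at_left_real) auto
      then show ?thesis
      proof (rule eventually_mono)
        fix u assume u: "u \<in> {s<..<T}"
        have "D u - D s \<ge> 2 * A * (u - s)" using Dinc[of s u] s u by auto
        moreover have "D u \<le> 0" using Dneg[of u] s u by auto
        ultimately show "D s \<le> -2 * A * (u - s)" by linarith
      qed
    qed
    have "((\<lambda>u. -2 * A * (u - s)) \<longlongrightarrow> -2 * A * (T - s)) (at_left T)"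
      by (intro tendsto_intros)
    from tendsto_le[OF nb this tendsto_const ev] show ?thesis .
  qed
  define psi where "psi u = I u - A * (T - u)^2" for u
  have dpsi: "(psi has_real_derivative (D u + 2 * A * (T - u))) (at u within {t2..<T})" if "u \<in> {t2..<T}" for u
    unfolding psi_def[abs_def] using dI[OF that]
    by (auto intro!: derivative_eq_intros simp: algebra_simps power2_eq_square)
  have ev: "eventually (\<lambda>u. psi u \<le> psi t) (at_left T)"
  proof -
    have "eventually (\<lambda>u. u \<in> {t<..<T}) (at_left T)" using t by (intro eventually_at_left_real) auto
    then show ?thesis
    proof (rule eventually_mono)
      fix u assume u: "u \<in> {t<..<T}"
      have dr: "(psi has_real_derivative (D r + 2 * A * (T - r))) (at r within {t..u})" if "r \<in> {t..u}" for r
        using that t u by (intro deriv_sub[OF dpsi]) auto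
      have "\<exists>\<xi>\<in>{t..u}. psi u - psi t = (D \<xi> + 2 * A * (T - \<xi>)) * (u - t)"
        by (rule mvt_real[OF _ dr]) (use u in auto)
      then obtain \<xi> where xi: "\<xi> \<in> {t..u}" "psi u - psi t = (D \<xi> + 2 * A * (T - \<xi>)) * (u - t)" by auto
      have "D \<xi> + 2 * A * (T - \<xi>) \<le> 0" using Dbound[of \<xi>] xi t u by auto
      then have "(D \<xi> + 2 * A * (T - \<xi>)) * (u - t) \<le> 0" using u by (simp add: mult_nonpos_nonneg)
      then show "psi u \<le> psi t" using xi by linarith
    qed
  qed
  have "(psi \<longlongrightarrow> 0 - A * (T - T)^2) (at_left T)"
    unfolding psi_def[abs_def] by (intro tendsto_intros Ilim)
  then have "(psi \<longlongrightarrow> 0) (at_left T)" by simp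
  from tendsto_le[OF nb tendsto_const this ev] have "psi t \<ge> 0" .
  then show ?thesis by (simp add: psi_def)
qed



lemma inner_amgm:
  fixes x w :: "'a::real_inner"
  assumes l: "l > 0"
  shows "2 * \<bar>x \<bullet> w\<bar> \<le> l * (x \<bullet> x) + (w \<bullet> w) / l"
proof -
  have 1: "0 \<le> (l *\<^sub>R x - w) \<bullet> (l *\<^sub>R x - w)" by simp
  have 2: "0 \<le> (l *\<^sub>R x + w) \<bullet> (l *\<^sub>R x + w)" by simp
  have e1: "(l *\<^sub>R x - w) \<bullet> (l *\<^sub>R x - w) = l * (l * (x \<bullet> x)) - 2 * l * (x \<bullet> w) + w \<bullet> w"
    by (simp add: inner_diff_left inner_diff_right inner_commute algebra_simps)
  have e2: "(l *\<^sub>R x + w) \<bullet> (l *\<^sub>R x + w) = l * (l * (x \<bullet> x)) + 2 * l * (x \<bullet> w) + w \<bullet> w"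
    by (simp add: inner_add_left inner_add_right inner_commute algebra_simps)
  have a: "2 * l * (x \<bullet> w) \<le> l * (l * (x \<bullet> x)) + w \<bullet> w" using 1 e1 by linarith
  have b: "- (2 * l * (x \<bullet> w)) \<le> l * (l * (x \<bullet> x)) + w \<bullet> w" using 2 e2 by linarith
  have c: "\<bar>2 * l * (x \<bullet> w)\<bar> \<le> l * (l * (x \<bullet> x)) + w \<bullet> w" using a b by (simp add: abs_le_iff)
  have "l * (2 * \<bar>x \<bullet> w\<bar>) = \<bar>2 * l * (x \<bullet> w)\<bar>" using l by (simp add: abs_mult)
  then have "l * (2 * \<bar>x \<bullet> w\<bar>) \<le> l * (l * (x \<bullet> x)) + w \<bullet> w" using c by simp
  then have "2 * \<bar>x \<bullet> w\<bar> \<le> (l * (l * (x \<bullet> x)) + w \<bullet> w) / l"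
    using l by (simp add: pos_le_divide_eq mult.commute)
  also have "\<dots> = l * (x \<bullet> x) + (w \<bullet> w) / l" using l by (simp add: field_simps)
  finally show ?thesis .
qed

lemma cube_diff_bound:
  fixes s u R :: real
  assumes "0 \<le> s" "s \<le> R" "0 \<le> u" "u \<le> R"
  shows "\<bar>u^3 - s^3\<bar> \<le> 3 * R^2 * \<bar>u - s\<bar>"
proof -
  have "u^3 - s^3 = (u - s) * (u^2 + u * s + s^2)" by (simp add: algebra_simps power2_eq_square power3_eq_cube)
  then have "abs (u^3 - s^3) = abs (u - s) * (u^2 + u * s + s^2)"
    using assms by (simp add: abs_mult)
  also have "u^2 + u * s + s^2 \<le> 3 * R^2"
  proof -
    have "u^2 \<le> R^2" "s^2 \<le> R^2" using assms by (auto intro: power_mono)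
    moreover have "u * s \<le> R * R" using assms by (intro mult_mono) auto
    ultimately show ?thesis by (simp add: power2_eq_square)
  qed
  then have "abs (u - s) * (u^2 + u * s + s^2) \<le> abs (u - s) * (3 * R^2)" by (intro mult_left_mono) auto
  finally show ?thesis by (simp add: algebra_simps)
qed

lemma inv_cube_diff:
  fixes s u R d :: real
  assumes d: "0 < d" and "d \<le> s" "s \<le> R" "d \<le> u" "u \<le> R"
  shows "\<bar>1 / s^3 - 1 / u^3\<bar> \<le> 3 * R^2 / d^6 * \<bar>u - s\<bar>"
proof -
  have sp: "s > 0" "u > 0" using assms by auto
  have "1 / s^3 - 1 / u^3 = (u^3 - s^3) / (s^3 * u^3)" using sp by (simp add: field_simps)
  then have "\<bar>1 / s^3 - 1 / u^3\<bar> = \<bar>u^3 - s^3\<bar> / (s^3 * u^3)" using sp by (simp add: abs_div)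
  also have "\<dots> \<le> (3 * R^2 * \<bar>u - s\<bar>) / (s^3 * u^3)"
    using cube_diff_bound[of s R u] assms sp by (intro divide_right_mono) auto
  also have "\<dots> \<le> (3 * R^2 * \<bar>u - s\<bar>) / (d^3 * d^3)"
  proof (rule divide_left_mono)
    show "d^3 * d^3 \<le> s^3 * u^3" using assms by (intro mult_mono power_mono) auto
  qed (use d sp in auto)
  also have "\<dots> = 3 * R^2 / d^6 * \<bar>u - s\<bar>" by (simp add: power_add[symmetric] numeral_eq_Suc)
  finally show ?thesis .
qed

lemma phi_lip:
  fixes a b :: "'a::real_normed_vector"
  assumes d: "0 < d" and "d \<le> norm a" "norm a \<le> R" "d \<le> norm b" "norm b \<le> R"
  shows "norm (phi a - phi b) \<le> (1 / d^3 + 3 * R^3 / d^6) * norm (a - b)"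
proof -
  have "phi a - phi b = (1 / norm a ^ 3) *\<^sub>R (a - b) + (1 / norm a ^ 3 - 1 / norm b ^ 3) *\<^sub>R b"
    by (simp add: phi_def algebra_simps)
  then have "norm (phi a - phi b) \<le> norm ((1 / norm a ^ 3) *\<^sub>R (a - b)) + norm ((1 / norm a ^ 3 - 1 / norm b ^ 3) *\<^sub>R b)"
    by (metis norm_triangle_ineq)
  also have "norm ((1 / norm a ^ 3) *\<^sub>R (a - b)) \<le> 1 / d^3 * norm (a - b)"
  proof -
    have "norm a > 0" using assms by linarith
    then have "1 / norm a ^ 3 \<le> 1 / d^3" using assms by (intro divide_left_mono power_mono) auto
    then show ?thesis by (simp add: mult_right_mono divide_inverse)
  qed
  also have "norm ((1 / norm a ^ 3 - 1 / norm b ^ 3) *\<^sub>R b) \<le> 3 * R^3 / d^6 * norm (a - b)"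
  proof -
    have "norm ((1 / norm a ^ 3 - 1 / norm b ^ 3) *\<^sub>R b) = \<bar>1 / norm a ^ 3 - 1 / norm b ^ 3\<bar> * norm b" by simp
    also have "\<dots> \<le> (3 * R^2 / d^6 * \<bar>norm b - norm a\<bar>) * R"
      using inv_cube_diff[of d "norm a" R "norm b"] assms by (intro mult_mono) auto
    also have "\<dots> \<le> (3 * R^2 / d^6 * norm (a - b)) * R"
    proof -
      have "\<bar>norm b - norm a\<bar> \<le> norm (a - b)" by (metis norm_triangle_ineq3 norm_minus_commute)
      then show ?thesis using assms by (intro mult_right_mono mult_left_mono) auto
    qed
    also have "\<dots> = 3 * R^3 / d^6 * norm (a - b)" by (simp add: power2_eq_square power3_eq_cube)
    finally show ?thesis .
  qed
  finally show ?thesis by (simp add: algebra_simps)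
qed

lemma vd_bound:
  fixes f :: "real \<Rightarrow> 'a::real_normed_vector"
  assumes "convex S" "\<And>s. s \<in> S \<Longrightarrow> (f has_vector_derivative f' s) (at s within S)"
    "\<And>s. s \<in> S \<Longrightarrow> norm (f' s) \<le> B" "x \<in> S" "y \<in> S"
  shows "norm (f x - f y) \<le> B * \<bar>x - y\<bar>"
proof -
  have B0: "B \<ge> 0" using assms(3)[OF assms(4)] norm_ge_zero order_trans by blast
  have "norm (f x - f y) \<le> B * norm (x - y)"
  proof (rule differentiable_bound[OF assms(1)])
    show "(f has_derivative (\<lambda>h. h *\<^sub>R f' s)) (at s within S)" if "s \<in> S" for s
      using assms(2)[OF that] by (simp add: has_vector_derivative_def)
    show "onorm (\<lambda>h. h *\<^sub>R f' s) \<le> B" if "s \<in> S" for s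
      by (rule onorm_bound) (use B0 assms(3)[OF that] in \<open>auto simp: mult.commute[of B] intro: mult_left_mono\<close>)
  qed (use assms in auto)
  then show ?thesis by simp
qed



lemma amgm_scalar:
  fixes p r I :: real
  assumes "I > 0"
  shows "p * r \<le> (I * p^2 + r^2 / I) / 2"
proof -
  have "0 \<le> (I * p - r)^2" by simp
  then have "2 * I * (p * r) \<le> I^2 * p^2 + r^2" by (simp add: power2_eq_square algebra_simps)
  then have "p * r \<le> (I^2 * p^2 + r^2) / (2 * I)" using assms by (simp add: pos_le_divide_eq mult.commute mult.left_commute)
  also have "\<dots> = (I * p^2 + r^2 / I) / 2" using assms by (simp add: field_simps power2_eq_square)
  finally show ?thesis .
qed

context nb begin

definition "Out = {..<n} - G"
definition "i0 = (SOME i. i \<in> G)"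
definition "dl = Min (insert 1 ((\<lambda>j. norm (L j - LG) / 2) ` Out))"
definition "RR = Max (insert 1 ((\<lambda>j. norm (L j - LG) + 1) ` Out))"
definition "msum = (\<Sum>j\<in>Out. m j)"
definition "Lam = msum * (1 / dl^3 + 3 * RR^3 / dl^6) + 1"
definition "gg t i = (\<Sum>j\<in>Out. m j *\<^sub>R phi (q t j - q t i))"
definition "sep t \<longleftrightarrow> (\<forall>i\<in>G. \<forall>j\<in>Out. dl \<le> norm (q t j - q t i) \<and> norm (q t j - q t i) \<le> RR)"

lemma finOut: "finite Out" by (simp add: Out_def)
lemma Out_prop: "j \<in> Out \<Longrightarrow> j < n \<and> j \<notin> G" by (simp add: Out_def)
lemma Gne: "G \<noteq> {}" using Gcard by auto
lemma i0G: "i0 \<in> G" unfolding i0_def using Gne by (simp add: some_in_eq)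
lemma mOut: "j \<in> Out \<Longrightarrow> m j > 0" using Out_prop mpos by auto
lemma msum_nonneg: "msum \<ge> 0" unfolding msum_def using mOut by (intro sum_nonneg) (auto intro: less_imp_le)

lemma dl_pos: "dl > 0"
proof -
  have "\<forall>y \<in> insert 1 ((\<lambda>j. norm (L j - LG) / 2) ` Out). y > 0"
    using Out_prop Gout by auto
  then show ?thesis unfolding dl_def using finOut by (subst Min_gr_iff) auto
qed

lemma RR_ge1: "RR \<ge> 1" unfolding RR_def using finOut by (intro Max_ge) auto

lemma Lam_pos: "Lam > 0"
proof -
  have "msum * (1 / dl^3 + 3 * RR^3 / dl^6) \<ge> 0"
    using msum_nonneg dl_pos RR_ge1 by (intro mult_nonneg_nonneg add_nonneg_nonneg) auto
  then show ?thesis by (simp add: Lam_def)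
qed

lemma q_lim: "i \<in> G \<Longrightarrow> ((\<lambda>t. q t i) \<longlongrightarrow> LG) (at_left T)"
  using lim[of i] Gin[of i] Gsub by auto

lemma c_lim: "(c \<longlongrightarrow> LG) (at_left T)"
proof -
  have "((\<lambda>t. inverse M *\<^sub>R (\<Sum>i\<in>G. m i *\<^sub>R q t i)) \<longlongrightarrow> inverse M *\<^sub>R (\<Sum>i\<in>G. m i *\<^sub>R LG)) (at_left T)"
    by (intro tendsto_intros q_lim)
  moreover have "inverse M *\<^sub>R (\<Sum>i\<in>G. m i *\<^sub>R LG) = LG"
    using Mpos by (simp add: scaleR_sum_left[symmetric] M_def)
  moreover have "c = (\<lambda>t. inverse M *\<^sub>R (\<Sum>i\<in>G. m i *\<^sub>R q t i))" by (rule ext) (simp add: c_eq)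
  ultimately show ?thesis by simp
qed

lemma x_lim: "i \<in> G \<Longrightarrow> ((\<lambda>t. x t i) \<longlongrightarrow> 0) (at_left T)"
proof -
  assume i: "i \<in> G"
  have "((\<lambda>t. q t i - c t) \<longlongrightarrow> LG - LG) (at_left T)" by (intro tendsto_intros q_lim i c_lim)
  then show ?thesis by (simp add: x_def)
qed

lemma II_lim: "(II \<longlongrightarrow> 0) (at_left T)"
proof -
  have "((\<lambda>t. \<Sum>i\<in>G. m i * (x t i \<bullet> x t i)) \<longlongrightarrow> (\<Sum>i\<in>G. m i * ((0::real^'d) \<bullet> 0))) (at_left T)"
  proof (intro tendsto_sum tendsto_mult tendsto_const)
    fix i assume i: "i \<in> G"
    show "((\<lambda>t. x t i \<bullet> x t i) \<longlongrightarrow> (0::real^'d) \<bullet> 0) (at_left T)"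
      using tendsto_inner[OF x_lim[OF i] x_lim[OF i]] .
  qed
  then show ?thesis by (simp add: II_def[abs_def])
qed

lemma sep_ev: "eventually sep (at_left T)"
proof -
  have "eventually (\<lambda>t. dl \<le> norm (q t j - q t i) \<and> norm (q t j - q t i) \<le> RR) (at_left T)"
    if i: "i \<in> G" and j: "j \<in> Out" for i j
  proof -
    define l where "l = norm (L j - LG)"
    have lpos: "l > 0" using Out_prop[OF j] Gout unfolding l_def by auto
    have lim1: "((\<lambda>t. norm (q t j - q t i)) \<longlongrightarrow> l) (at_left T)"
      unfolding l_def using Out_prop[OF j] by (intro tendsto_intros lim q_lim i) auto
    have e1: "eventually (\<lambda>t. norm (q t j - q t i) > l / 2) (at_left T)"
      using order_tendstoD(1)[OF lim1, of "l/2"] lpos by auto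
    have e2: "eventually (\<lambda>t. norm (q t j - q t i) < l + 1) (at_left T)"
      using order_tendstoD(2)[OF lim1, of "l+1"] by auto
    have h1: "dl \<le> l / 2" unfolding dl_def l_def using j finOut by (intro Min_le) auto
    have h2: "l + 1 \<le> RR" unfolding RR_def l_def using j finOut by (intro Max_ge) auto
    from e1 e2 show ?thesis by eventually_elim (use h1 h2 in auto)
  qed
  then have "eventually (\<lambda>t. \<forall>j\<in>Out. dl \<le> norm (q t j - q t i) \<and> norm (q t j - q t i) \<le> RR) (at_left T)"
    if "i \<in> G" for i
    using that by (intro eventually_ball_finite[OF finOut] ballI) auto
  then have "eventually (\<lambda>t. \<forall>i\<in>G. \<forall>j\<in>Out. dl \<le> norm (q t j - q t i) \<and> norm (q t j - q t i) \<le> RR) (at_left T)"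
    by (intro eventually_ball_finite[OF finG] ballI) auto
  then show ?thesis unfolding sep_def .
qed

lemma Fext_eq: "Fext t i = m i *\<^sub>R gg t i"
  by (simp add: Fext_def F_def gg_def Out_def[symmetric] scaleR_sum_right)

lemma gg_bound: "sep t \<Longrightarrow> i \<in> G \<Longrightarrow> norm (gg t i) \<le> msum / dl^2"
proof -
  assume s: "sep t" and i: "i \<in> G"
  have "norm (gg t i) \<le> (\<Sum>j\<in>Out. norm (m j *\<^sub>R phi (q t j - q t i)))"
    unfolding gg_def by (rule norm_sum)
  also have "\<dots> \<le> (\<Sum>j\<in>Out. m j * (1 / dl^2))"
  proof (intro sum_mono)
    fix j assume j: "j \<in> Out"
    have d: "dl \<le> norm (q t j - q t i)" using s i j by (auto simp: sep_def)
    have np: "norm (q t j - q t i) > 0" using d dl_pos by linarith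
    have "1 / norm (q t j - q t i) ^ 2 \<le> 1 / dl^2"
      using d dl_pos np by (intro divide_left_mono power_mono) auto
    from mult_left_mono[OF this, of "m j"] show "norm (m j *\<^sub>R phi (q t j - q t i)) \<le> m j * (1 / dl^2)"
      using mOut[OF j] by (simp add: norm_phi)
  qed
  also have "\<dots> = msum / dl^2" by (simp add: msum_def sum_divide_distrib)
  finally show ?thesis .
qed

lemma gg_lip: "sep t \<Longrightarrow> i \<in> G \<Longrightarrow> k \<in> G \<Longrightarrow> norm (gg t i - gg t k) \<le> Lam * norm (q t i - q t k)"
proof -
  assume s: "sep t" and i: "i \<in> G" and k: "k \<in> G"
  define C where "C = 1 / dl^3 + 3 * RR^3 / dl^6"
  have eq: "gg t i - gg t k = (\<Sum>j\<in>Out. m j *\<^sub>R (phi (q t j - q t i) - phi (q t j - q t k)))"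
    by (simp add: gg_def sum_subtractf scaleR_diff_right)
  have "norm (gg t i - gg t k) \<le> (\<Sum>j\<in>Out. norm (m j *\<^sub>R (phi (q t j - q t i) - phi (q t j - q t k))))"
    unfolding eq by (rule norm_sum)
  also have "\<dots> \<le> (\<Sum>j\<in>Out. m j * (C * norm (q t i - q t k)))"
  proof (intro sum_mono)
    fix j assume j: "j \<in> Out"
    have "norm (phi (q t j - q t i) - phi (q t j - q t k)) \<le> C * norm ((q t j - q t i) - (q t j - q t k))"
      unfolding C_def using s i k j dl_pos by (intro phi_lip) (auto simp: sep_def)
    also have "(q t j - q t i) - (q t j - q t k) = - (q t i - q t k)" by simp
    finally have "norm (phi (q t j - q t i) - phi (q t j - q t k)) \<le> C * norm (q t i - q t k)"
      by (simp only: norm_minus_cancel)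
    then show "norm (m j *\<^sub>R (phi (q t j - q t i) - phi (q t j - q t k))) \<le> m j * (C * norm (q t i - q t k))"
      using mOut[OF j] by (simp add: mult_left_mono)
  qed
  also have "\<dots> = msum * C * norm (q t i - q t k)" by (simp add: msum_def sum_distrib_right[symmetric] mult.assoc)
  also have "\<dots> \<le> Lam * norm (q t i - q t k)"
    unfolding Lam_def C_def by (intro mult_right_mono) auto
  finally show ?thesis .
qed

lemma II_nonneg: "II t \<ge> 0" unfolding II_def by (intro sum_nonneg mult_nonneg_nonneg) (use mG in \<open>auto intro: less_imp_le\<close>)
lemma KK_nonneg: "KK t \<ge> 0" unfolding KK_def by (intro divide_nonneg_pos sum_nonneg mult_nonneg_nonneg) (use mG in \<open>auto intro: less_imp_le\<close>)

lemma m_nonneg: "i \<in> G \<Longrightarrow> 0 \<le> m i" using mG less_imp_le by blast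

lemma x_le_II: "i \<in> G \<Longrightarrow> m i * (x t i \<bullet> x t i) \<le> II t"
  unfolding II_def by (rule member_le_sum) (use finG in \<open>auto intro!: mult_nonneg_nonneg m_nonneg\<close>)

lemma II_pos: assumes t: "t \<in> {t0..<T}" shows "II t > 0"
proof (rule ccontr)
  assume "\<not> II t > 0"
  then have z: "II t = 0" using II_nonneg[of t] by auto
  have "x t i = 0" if i: "i \<in> G" for i
  proof -
    have "m i * (x t i \<bullet> x t i) \<le> 0" using x_le_II[OF i, of t] z by simp
    then have "x t i \<bullet> x t i \<le> 0" using mG[OF i] by (simp add: mult_le_0_iff)
    then show ?thesis by (metis antisym inner_ge_zero inner_eq_zero_iff)
  qed
  moreover have "\<not> card G \<le> Suc 0" using Gcard by simp
  then obtain i j where "i \<in> G" "j \<in> G" "i \<noteq> j"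
    using card_le_Suc0_iff_eq[OF finG] by blast
  ultimately show False using nocoll[of i j t] Gsub t by (auto simp: x_def)
qed

end


lemma key_ineq:
  fixes I K E U D e Ed Lam C0 eb :: real
  assumes I0: "0 < I" and I1: "I \<le> 1" and K0: "K \<ge> 0" and L0: "Lam > 0"
    and Ed: "Ed \<ge> - (Lam * (I * K + C0))" and e: "\<bar>e\<bar> \<le> eb"
    and D: "\<bar>D\<bar> \<le> (4 * Lam * I + 1) * I + 2 * K / (4 * Lam * I + 1)" and E: "E = K - U"
  shows "Ed + Lam * (D * D + I * (4 * K - 2 * U + e)) \<ge> - (Lam * C0 + Lam * eb + 2 * Lam^2 * (4 * Lam + 1)) + 2 * Lam * I * (E + Lam * I * D)"
proof -
  define l where "l = 4 * Lam * I + 1"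
  have h: "0 < 4 * Lam * I" using I0 L0 by simp
  have lpos: "l > 0" "l \<ge> 1" unfolding l_def using h by linarith+
  have DD0: "Lam * (D * D) \<ge> 0" using L0 by simp
  have ie: "Lam * I * e \<ge> - (Lam * eb)"
  proof -
    have "I * \<bar>e\<bar> \<le> 1 * eb" by (rule mult_mono) (use I0 I1 e in auto)
    then have "\<bar>I * e\<bar> \<le> 1 * eb" using I0 by (simp add: abs_mult)
    then have "I * e \<ge> - eb" by linarith
    then show ?thesis using L0 by (metis mult.assoc mult_left_mono mult_minus_right less_imp_le)
  qed
  have DI: "2 * Lam^2 * I^2 * D \<le> 2 * Lam^2 * I^2 * (l * I + 2 * K / l)"
  proof -
    have "D \<le> l * I + 2 * K / l" using D by (simp add: l_def)
    then show ?thesis using L0 by (intro mult_left_mono) auto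
  qed
  have t1: "2 * Lam^2 * I^2 * (l * I) \<le> 2 * Lam^2 * (4 * Lam + 1)"
  proof -
    have "I^2 * (l * I) \<le> 1 * (4 * Lam + 1)"
    proof (intro mult_mono)
      show "I^2 \<le> 1" using I0 I1 by (simp add: power_le_one)
      show "l * I \<le> 4 * Lam + 1"
      proof -
        have "l \<le> 4 * Lam + 1" using I1 L0 by (simp add: l_def)
        then have "l * I \<le> (4 * Lam + 1) * 1" using I0 I1 lpos L0 by (intro mult_mono) auto
        then show ?thesis by simp
      qed
    qed (use I0 lpos in auto)
    then show ?thesis using L0 by (simp add: mult.assoc mult_left_mono)
  qed
  have t2: "2 * Lam^2 * I^2 * (2 * K / l) \<le> Lam * I * K"
  proof -
    have "2 * Lam^2 * I^2 * (2 * K / l) = (Lam * I * K) * ((4 * Lam * I) / l)"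
      by (simp add: power2_eq_square algebra_simps)
    also have "\<dots> \<le> (Lam * I * K) * 1"
      using lpos L0 I0 K0 by (intro mult_left_mono) (auto simp: l_def)
    finally show ?thesis by simp
  qed
  have "Ed + Lam * (D * D + I * (4 * K - 2 * U + e))
      = Ed + Lam * (D * D) + Lam * I * (2 * K) + 2 * Lam * I * E + Lam * I * e"
    unfolding E by (simp add: algebra_simps)
  moreover have "- (Lam * C0 + Lam * eb + 2 * Lam^2 * (4 * Lam + 1)) + 2 * Lam * I * (E + Lam * I * D)
      = - (Lam * C0 + Lam * eb + 2 * Lam^2 * (4 * Lam + 1)) + 2 * Lam * I * E + 2 * Lam^2 * I^2 * D"
    by (simp add: power2_eq_square algebra_simps)
  moreover have "2 * Lam^2 * I^2 * (l * I + 2 * K / l) = 2 * Lam^2 * I^2 * (l * I) + 2 * Lam^2 * I^2 * (2 * K / l)"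
    by (simp add: algebra_simps)
  moreover have "Ed \<ge> - (Lam * I * K) - Lam * C0" using Ed by (simp add: algebra_simps)
  moreover have "Lam * I * (2 * K) = 2 * (Lam * I * K)" by simp
  ultimately show ?thesis using DD0 ie DI t1 t2 by linarith
qed

lemma key_ineq2:
  fixes I K D Lam :: real
  assumes I0: "0 < I" and I1: "I \<le> 1" and K0: "K \<ge> 0" and L0: "Lam > 0"
    and D: "\<bar>D\<bar> \<le> (4 * Lam * I + 1) * I + 2 * K / (4 * Lam * I + 1)"
  shows "Lam * I * D \<le> Lam * (4 * Lam + 1) + K / 2"
proof -
  define l where "l = 4 * Lam * I + 1"
  have h: "0 < 4 * Lam * I" using I0 L0 by simp
  have lpos: "l > 0" "l \<ge> 1" unfolding l_def using h by linarith+
  have "Lam * I * D \<le> Lam * I * (l * I + 2 * K / l)"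
  proof -
    have "D \<le> l * I + 2 * K / l" using D by (simp add: l_def)
    then show ?thesis using L0 I0 by (intro mult_left_mono) auto
  qed
  also have "\<dots> = Lam * (l * I^2) + (K / 2) * ((4 * Lam * I) / l)"
    by (simp add: power2_eq_square algebra_simps)
  also have "(K / 2) * ((4 * Lam * I) / l) \<le> (K / 2) * 1"
    using lpos L0 I0 K0 by (intro mult_left_mono) (auto simp: l_def)
  also have "Lam * (l * I^2) \<le> Lam * (4 * Lam + 1)"
  proof -
    have "l * I^2 \<le> (4 * Lam + 1) * 1"
      using I0 I1 L0 lpos by (intro mult_mono) (auto simp: l_def power_le_one)
    then show ?thesis using L0 by (simp add: mult_left_mono)
  qed
  finally show ?thesis by simp
qed

lemma sq_sum_le: fixes a b :: real shows "(a + b)^2 \<le> 2 * (a^2 + b^2)"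
proof -
  have "0 \<le> (a - b)^2" by simp
  then show ?thesis unfolding power2_sum power2_diff by (simp add: algebra_simps)
qed

context nb begin

lemma DD_bound: assumes l: "l > 0" shows "\<bar>DD t\<bar> \<le> l * II t + 2 * KK t / l"
proof -
  have "\<bar>DD t\<bar> \<le> (\<Sum>i\<in>G. m i * (2 * \<bar>x t i \<bullet> w t i\<bar>))"
  proof -
    have "\<bar>DD t\<bar> = \<bar>\<Sum>i\<in>G. 2 * (m i * (x t i \<bullet> w t i))\<bar>" by (simp add: DD_def sum_distrib_left)
    also have "\<dots> \<le> (\<Sum>i\<in>G. \<bar>2 * (m i * (x t i \<bullet> w t i))\<bar>)" by (rule sum_abs)
    also have "\<dots> = (\<Sum>i\<in>G. m i * (2 * \<bar>x t i \<bullet> w t i\<bar>))"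
      by (intro sum.cong refl) (use m_nonneg in \<open>auto simp: abs_mult\<close>)
    finally show ?thesis .
  qed
  also have "\<dots> \<le> (\<Sum>i\<in>G. m i * (l * (x t i \<bullet> x t i) + (w t i \<bullet> w t i) / l))"
    by (intro sum_mono mult_left_mono inner_amgm l m_nonneg)
  also have "\<dots> = l * II t + 2 * KK t / l"
    by (simp add: II_def KK_def algebra_simps sum.distrib sum_distrib_left sum_divide_distrib)
  finally show ?thesis .
qed

lemma EEd_bound:
  assumes t: "t \<in> {t0..<T}" and s: "sep t"
  shows "\<bar>\<Sum>i\<in>G. w t i \<bullet> Fext t i\<bar> \<le> Lam * (II t * KK t + 1 + M / m i0)"
proof -
  define I where "I = II t"
  have Ipos: "I > 0" unfolding I_def by (rule II_pos[OF t])
  have e1: "(\<Sum>i\<in>G. w t i \<bullet> Fext t i) = (\<Sum>i\<in>G. m i * (w t i \<bullet> (gg t i - gg t i0)))"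
  proof -
    have "(\<Sum>i\<in>G. w t i \<bullet> Fext t i) = (\<Sum>i\<in>G. m i * (w t i \<bullet> gg t i))" by (simp add: Fext_eq)
    also have "\<dots> = (\<Sum>i\<in>G. m i * (w t i \<bullet> (gg t i - gg t i0))) + (\<Sum>i\<in>G. m i * (w t i \<bullet> gg t i0))"
      by (simp add: inner_diff_right right_diff_distrib sum_subtractf)
    also have "(\<Sum>i\<in>G. m i * (w t i \<bullet> gg t i0)) = 0" by (rule sum_inner_zero[OF sum_mw])
    finally show ?thesis by simp
  qed
  have b: "\<bar>m i * (w t i \<bullet> (gg t i - gg t i0))\<bar>
      \<le> Lam * (m i * (I * (w t i \<bullet> w t i) / 2 + ((x t i \<bullet> x t i) + (x t i0 \<bullet> x t i0)) / I))"
    if i: "i \<in> G" for i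
  proof -
    define r where "r = norm (x t i) + norm (x t i0)"
    have "\<bar>w t i \<bullet> (gg t i - gg t i0)\<bar> \<le> norm (w t i) * norm (gg t i - gg t i0)"
      by (rule Cauchy_Schwarz_ineq2)
    also have "norm (gg t i - gg t i0) \<le> Lam * r"
    proof -
      have "norm (gg t i - gg t i0) \<le> Lam * norm (q t i - q t i0)" by (rule gg_lip[OF s i i0G])
      also have "q t i - q t i0 = x t i - x t i0" by (simp add: x_def)
      also have "Lam * norm (x t i - x t i0) \<le> Lam * r"
        unfolding r_def using Lam_pos by (intro mult_left_mono norm_triangle_ineq4) auto
      finally show ?thesis .
    qed
    then have "norm (w t i) * norm (gg t i - gg t i0) \<le> norm (w t i) * (Lam * r)" by (simp add: mult_left_mono)
    finally have 1: "\<bar>w t i \<bullet> (gg t i - gg t i0)\<bar> \<le> Lam * (norm (w t i) * r)" by (simp add: algebra_simps)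
    have "norm (w t i) * r \<le> (I * (norm (w t i))^2 + r^2 / I) / 2" by (rule amgm_scalar[OF Ipos])
    also have "r^2 \<le> 2 * ((x t i \<bullet> x t i) + (x t i0 \<bullet> x t i0))"
    proof -
      have "r^2 \<le> 2 * ((norm (x t i))^2 + (norm (x t i0))^2)"
        unfolding r_def by (rule sq_sum_le)
      then show ?thesis by (simp add: power2_norm_eq_inner)
    qed
    then have "(I * (norm (w t i))^2 + r^2 / I) / 2 \<le> (I * (norm (w t i))^2 + 2 * ((x t i \<bullet> x t i) + (x t i0 \<bullet> x t i0)) / I) / 2"
      using Ipos by (simp add: divide_right_mono)
    finally have 2: "norm (w t i) * r \<le> (I * (w t i \<bullet> w t i) + 2 * ((x t i \<bullet> x t i) + (x t i0 \<bullet> x t i0)) / I) / 2"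
      by (simp add: power2_norm_eq_inner)
    then have 2: "norm (w t i) * r \<le> I * (w t i \<bullet> w t i) / 2 + ((x t i \<bullet> x t i) + (x t i0 \<bullet> x t i0)) / I"
      by (simp add: add_divide_distrib)
    have "\<bar>m i * (w t i \<bullet> (gg t i - gg t i0))\<bar> = m i * \<bar>w t i \<bullet> (gg t i - gg t i0)\<bar>"
      using m_nonneg[OF i] by (simp add: abs_mult)
    also have "\<dots> \<le> m i * (Lam * (norm (w t i) * r))" using 1 m_nonneg[OF i] by (rule mult_left_mono)
    also have "\<dots> \<le> m i * (Lam * (I * (w t i \<bullet> w t i) / 2 + ((x t i \<bullet> x t i) + (x t i0 \<bullet> x t i0)) / I))"
      using 2 m_nonneg[OF i] Lam_pos by (intro mult_left_mono) auto
    finally show ?thesis by (simp add: algebra_simps)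
  qed
  have "\<bar>\<Sum>i\<in>G. w t i \<bullet> Fext t i\<bar> \<le> (\<Sum>i\<in>G. \<bar>m i * (w t i \<bullet> (gg t i - gg t i0))\<bar>)"
    unfolding e1 by (rule sum_abs)
  also have "\<dots> \<le> (\<Sum>i\<in>G. Lam * (m i * (I * (w t i \<bullet> w t i) / 2 + ((x t i \<bullet> x t i) + (x t i0 \<bullet> x t i0)) / I)))"
    by (rule sum_mono) (rule b)
  also have "\<dots> = (\<Sum>i\<in>G. (Lam * I / 2) * (m i * (w t i \<bullet> w t i)) + (Lam / I) * (m i * (x t i \<bullet> x t i))
      + (Lam * (x t i0 \<bullet> x t i0) / I) * m i)"
    using Ipos by (intro sum.cong refl) (simp add: field_simps)
  also have "\<dots> = (Lam * I / 2) * (\<Sum>i\<in>G. m i * (w t i \<bullet> w t i)) + (Lam / I) * II t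
      + (Lam * (x t i0 \<bullet> x t i0) / I) * M"
    by (simp add: sum.distrib sum_distrib_left M_def II_def)
  also have "\<dots> = Lam * (I * KK t + II t / I + M * (x t i0 \<bullet> x t i0) / I)"
    using Ipos by (simp add: KK_def field_simps)
  also have "\<dots> \<le> Lam * (II t * KK t + 1 + M / m i0)"
  proof -
    have a: "II t / I = 1" using Ipos by (simp add: I_def)
    have "m i0 * (x t i0 \<bullet> x t i0) \<le> I" unfolding I_def by (rule x_le_II[OF i0G])
    then have "M * (x t i0 \<bullet> x t i0) / I \<le> M / m i0"
      using Ipos mG[OF i0G] Mpos by (simp add: field_simps mult_left_mono)
    then have "I * KK t + II t / I + M * (x t i0 \<bullet> x t i0) / I \<le> II t * KK t + 1 + M / m i0"
      using a by (simp add: I_def)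
    from mult_left_mono[OF this, of Lam] show ?thesis using Lam_pos by simp
  qed
  finally show ?thesis .
qed

end


context nb begin

definition "eb = 2 * (M * msum / dl^2)"
definition "C0 = 1 + M / m i0"

lemma ee_bound:
  assumes s: "sep t" and xb: "\<forall>i\<in>G. norm (x t i) \<le> 1"
  shows "\<bar>ee t\<bar> \<le> eb"
proof -
  have "\<bar>\<Sum>i\<in>G. x t i \<bullet> Fext t i\<bar> \<le> (\<Sum>i\<in>G. \<bar>x t i \<bullet> Fext t i\<bar>)" by (rule sum_abs)
  also have "\<dots> \<le> (\<Sum>i\<in>G. m i * (msum / dl^2))"
  proof (rule sum_mono)
    fix i assume i: "i \<in> G"
    have "\<bar>x t i \<bullet> Fext t i\<bar> \<le> norm (x t i) * norm (Fext t i)" by (rule Cauchy_Schwarz_ineq2)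
    also have "\<dots> \<le> 1 * (m i * (msum / dl^2))"
    proof (rule mult_mono)
      show "norm (x t i) \<le> 1" using xb i by auto
      show "norm (Fext t i) \<le> m i * (msum / dl^2)"
        using mult_left_mono[OF gg_bound[OF s i] m_nonneg[OF i]] m_nonneg[OF i] by (simp add: Fext_eq)
    qed auto
    finally show "\<bar>x t i \<bullet> Fext t i\<bar> \<le> m i * (msum / dl^2)" by simp
  qed
  also have "\<dots> = M * msum / dl^2" by (simp add: M_def sum_distrib_right sum_divide_distrib)
  finally show ?thesis by (simp add: ee_def eb_def abs_mult)
qed

lemma ca_bound:
  assumes t: "t \<in> {t0..<T}" and s: "sep t"
  shows "norm (ca t) \<le> msum / dl^2"
proof -
  have "(\<Sum>i\<in>G. m i *\<^sub>R a t i) = (\<Sum>i\<in>G. Fint t i) + (\<Sum>i\<in>G. Fext t i)"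
    using newton_G[OF _ t] by (simp add: sum.distrib)
  then have e: "ca t = inverse M *\<^sub>R (\<Sum>i\<in>G. Fext t i)" by (simp add: ca_def sum_Fint)
  have "norm (\<Sum>i\<in>G. Fext t i) \<le> (\<Sum>i\<in>G. norm (Fext t i))" by (rule norm_sum)
  also have "\<dots> \<le> (\<Sum>i\<in>G. m i * (msum / dl^2))"
  proof (rule sum_mono)
    fix i assume i: "i \<in> G"
    show "norm (Fext t i) \<le> m i * (msum / dl^2)"
      using mult_left_mono[OF gg_bound[OF s i] m_nonneg[OF i]] m_nonneg[OF i] by (simp add: Fext_eq)
  qed
  also have "\<dots> = M * (msum / dl^2)" by (simp add: M_def sum_distrib_right sum_divide_distrib)
  finally have h: "norm (\<Sum>i\<in>G. Fext t i) \<le> M * (msum / dl^2)" .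
  have "norm (ca t) = inverse M * norm (\<Sum>i\<in>G. Fext t i)" using Mpos by (simp add: e)
  also have "\<dots> \<le> inverse M * (M * (msum / dl^2))" using Mpos by (intro mult_left_mono[OF h]) auto
  also have "inverse M * (M * (msum / dl^2)) = msum / dl^2" using Mpos by simp
  finally show ?thesis .
qed

lemma UU_ge:
  assumes i: "i \<in> G" and j: "j \<in> G" and ij: "i \<noteq> j"
  shows "UU t \<ge> m i * m j / norm (q t i - q t j)"
proof -
  define f where "f a b = m a * m b / norm (q t a - q t b)" for a b
  have f0: "f a b \<ge> 0" if "a \<in> G" "b \<in> G" for a b
    unfolding f_def using m_nonneg that by auto
  have r: "(\<Sum>b\<in>G. f a b) \<ge> f a c" if "a \<in> G" "c \<in> G" for a c
    by (rule member_le_sum) (use that finG f0 in auto)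
  have "(\<Sum>a\<in>G. \<Sum>b\<in>G. f a b) \<ge> (\<Sum>a\<in>{i,j}. \<Sum>b\<in>G. f a b)"
    by (rule sum_mono2) (use finG i j f0 in \<open>auto intro: sum_nonneg\<close>)
  also have "(\<Sum>a\<in>{i,j}. \<Sum>b\<in>G. f a b) = (\<Sum>b\<in>G. f i b) + (\<Sum>b\<in>G. f j b)" using ij by simp
  finally have "(\<Sum>a\<in>G. \<Sum>b\<in>G. f a b) \<ge> f i j + f j i" using r[OF i j] r[OF j i] by linarith
  moreover have "f j i = f i j" unfolding f_def by (simp add: norm_minus_commute mult.commute)
  ultimately have "(\<Sum>a\<in>G. \<Sum>b\<in>G. f a b) \<ge> 2 * f i j" by linarith
  then show ?thesis unfolding UU_def f_def by linarith
qed

lemma UU_big: "eventually (\<lambda>t. UU t \<ge> A) (at_left T)"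
proof -
  have "\<not> card G \<le> Suc 0" using Gcard by simp
  then obtain i j where i: "i \<in> G" and j: "j \<in> G" and ij: "i \<noteq> j"
    using card_le_Suc0_iff_eq[OF finG] by blast
  define K where "K = m i * m j"
  have Kpos: "K > 0" using mG[OF i] mG[OF j] by (simp add: K_def)
  define A' where "A' = max A 1"
  have "((\<lambda>t. norm (q t i - q t j)) \<longlongrightarrow> norm (LG - LG)) (at_left T)"
    by (intro tendsto_intros q_lim i j)
  then have "((\<lambda>t. norm (q t i - q t j)) \<longlongrightarrow> 0) (at_left T)" by simp
  then have e1: "eventually (\<lambda>t. norm (q t i - q t j) < K / A') (at_left T)"
    using Kpos by (intro order_tendstoD(2)) (auto simp: A'_def)
  have e2: "eventually (\<lambda>t. t \<in> {t0<..<T}) (at_left T)" using t0T by (intro eventually_at_left_real)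
  from e1 e2 show ?thesis
  proof eventually_elim
    case (elim t)
    have tS: "t \<in> {t0..<T}" using elim by auto
    have np: "norm (q t i - q t j) > 0" using nocoll[OF _ _ ij tS] i j Gsub by auto
    have A'pos: "A' > 0" by (simp add: A'_def)
    have "A' * norm (q t i - q t j) < K" using elim(1) A'pos by (simp add: field_simps)
    then have "A' < K / norm (q t i - q t j)" using np by (simp add: field_simps)
    then have "A \<le> K / norm (q t i - q t j)" by (simp add: A'_def)
    then show ?case using UU_ge[OF i j ij, of t] by (simp add: K_def)
  qed
qed

end


context nb begin

lemma eb_nonneg: "eb \<ge> 0"
  unfolding eb_def using Mpos msum_nonneg by simp
lemma C0_nonneg: "C0 \<ge> 0"
  unfolding C0_def using Mpos mG[OF i0G] by simp

lemma main_DDd: "\<exists>t1 c3. t0 < t1 \<and> t1 < T \<and> (\<forall>t\<in>{t1..<T}. DDd t \<ge> c3 + (2/3) * UU t)"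
proof -
  define P where "P t \<longleftrightarrow> sep t \<and> (\<forall>i\<in>G. norm (x t i) \<le> 1) \<and> II t \<le> 1" for t
  have evx: "eventually (\<lambda>t. \<forall>i\<in>G. norm (x t i) \<le> 1) (at_left T)"
  proof (intro eventually_ball_finite[OF finG] ballI)
    fix i assume i: "i \<in> G"
    have "((\<lambda>t. norm (x t i)) \<longlongrightarrow> 0) (at_left T)" using tendsto_norm_zero[OF x_lim[OF i]] .
    from order_tendstoD(2)[OF this, of 1] show "eventually (\<lambda>t. norm (x t i) \<le> 1) (at_left T)"
      by (auto elim: eventually_mono)
  qed
  have evI: "eventually (\<lambda>t. II t \<le> 1) (at_left T)"
    using order_tendstoD(2)[OF II_lim, of 1] by (auto elim: eventually_mono)
  have "eventually P (at_left T)" unfolding P_def using sep_ev evx evI by (auto intro: eventually_conj)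
  then obtain b where b: "b < T" and bP: "\<And>y. b < y \<Longrightarrow> y < T \<Longrightarrow> P y"
    unfolding eventually_at_left_field by auto
  define mx where "mx = max (max b t0) (T - 1 / (8 * Lam))"
  define t1 where "t1 = (mx + T) / 2"
  have mxT: "mx < T" using b t0T Lam_pos by (simp add: mx_def)
  have t1T: "t1 < T" "t0 < t1" "b < t1" using mxT by (auto simp: t1_def mx_def)
  have Tt1: "T - t1 \<le> 1 / (16 * Lam)"
  proof -
    have "T - 1 / (8 * Lam) \<le> mx" by (simp add: mx_def)
    then show ?thesis by (simp add: t1_def field_simps)
  qed
  have small: "(2 * Lam) * (T - t1) \<le> 1/2"
  proof -
    have "(2 * Lam) * (T - t1) \<le> (2 * Lam) * (1 / (16 * Lam))"
      using Tt1 Lam_pos by (intro mult_left_mono) auto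
    also have "\<dots> = 1/8" using Lam_pos by simp
    finally show ?thesis by simp
  qed
  have Pt: "P t" "t \<in> {t0..<T}" if "t \<in> {t1..<T}" for t
    using that t1T bP by auto
  define Yf where "Yf s = EE s + Lam * (II s * DD s)" for s
  define Yd where "Yd s = (\<Sum>i\<in>G. w s i \<bullet> Fext s i) + Lam * (II s * DDd s + DD s * DD s)" for s
  have dY: "(Yf has_real_derivative Yd s) (at s within {t1..<T})" if s: "s \<in> {t1..<T}" for s
  proof -
    have sS: "s \<in> {t0..<T}" using Pt(2)[OF s] .
    have "((\<lambda>s. EE s + Lam * (II s * DD s)) has_vector_derivative Yd s) (at s within {t0..<T})"
      unfolding Yd_def
      by (intro has_vector_derivative_add d_EE has_vector_derivative_mult_right has_vector_derivative_mult d_II d_DD sS)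
    then have "(Yf has_real_derivative Yd s) (at s within {t0..<T})"
      by (simp add: has_real_derivative_iff_has_vector_derivative Yf_def[abs_def])
    then show ?thesis by (rule DERIV_subset) (use t1T in auto)
  qed
  define a where "a = Lam * C0 + Lam * eb + 2 * Lam^2 * (4 * Lam + 1)"
  have ineq: "Yd t \<ge> - a + (2 * Lam * II t) * Yf t" if t: "t \<in> {t1..<T}" for t
  proof -
    have tS: "t \<in> {t0..<T}" and Pt': "P t" using Pt[OF t] by auto
    have I0: "0 < II t" by (rule II_pos[OF tS])
    have I1: "II t \<le> 1" using Pt' by (simp add: P_def)
    have Ed: "(\<Sum>i\<in>G. w t i \<bullet> Fext t i) \<ge> - (Lam * (II t * KK t + C0))"
      using EEd_bound[OF tS] Pt' by (simp add: P_def C0_def abs_le_iff algebra_simps)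
    have e: "\<bar>ee t\<bar> \<le> eb" using ee_bound Pt' by (simp add: P_def)
    have D: "\<bar>DD t\<bar> \<le> (4 * Lam * II t + 1) * II t + 2 * KK t / (4 * Lam * II t + 1)"
      using DD_bound[of "4 * Lam * II t + 1" t] I0 Lam_pos by (simp add: add_pos_pos)
    have k: "(\<Sum>i\<in>G. w t i \<bullet> Fext t i) + Lam * (DD t * DD t + II t * (4 * KK t - 2 * UU t + ee t))
       \<ge> - a + 2 * Lam * II t * (EE t + Lam * II t * DD t)"
      unfolding a_def by (rule key_ineq[OF I0 I1 KK_nonneg Lam_pos Ed e D]) (simp add: EE_def)
    then show ?thesis by (simp add: Yd_def Yf_def DDd_def algebra_simps)
  qed
  have Ylow: "Yf t \<ge> min 0 (2 * (Yf t1 - a * (T - t1)))" if t: "t \<in> {t1..<T}" for t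
  proof (rule gron[OF t1T(1) dY ineq])
    show "0 \<le> 2 * Lam * II s" if "s \<in> {t1..<T}" for s using II_nonneg Lam_pos by simp
    show "2 * Lam * II s \<le> 2 * Lam" if "s \<in> {t1..<T}" for s
      using Pt[OF that] Lam_pos by (simp add: P_def)
    show "a \<ge> 0" unfolding a_def using Lam_pos C0_nonneg eb_nonneg by simp
  qed (use small t in auto)
  define c2 where "c2 = min 0 (2 * (Yf t1 - a * (T - t1))) - Lam * (4 * Lam + 1)"
  have "DDd t \<ge> (8/3) * c2 - eb + (2/3) * UU t" if t: "t \<in> {t1..<T}" for t
  proof -
    have tS: "t \<in> {t0..<T}" and Pt': "P t" using Pt[OF t] by auto
    have I0: "0 < II t" by (rule II_pos[OF tS])
    have I1: "II t \<le> 1" using Pt' by (simp add: P_def)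
    have D: "\<bar>DD t\<bar> \<le> (4 * Lam * II t + 1) * II t + 2 * KK t / (4 * Lam * II t + 1)"
      using DD_bound[of "4 * Lam * II t + 1" t] I0 Lam_pos by (simp add: add_pos_pos)
    have k2: "Lam * II t * DD t \<le> Lam * (4 * Lam + 1) + KK t / 2"
      by (rule key_ineq2[OF I0 I1 KK_nonneg Lam_pos D])
    have y: "EE t + Lam * II t * DD t \<ge> c2 + Lam * (4 * Lam + 1)"
      using Ylow[OF t] by (simp add: Yf_def c2_def mult.assoc)
    have e0: "\<bar>ee t\<bar> \<le> eb" using ee_bound Pt' by (simp add: P_def)
    then have e: "ee t \<ge> - eb" by (auto simp: abs_le_iff)
    show ?thesis using k2 y e by (simp add: DDd_def EE_def)
  qed
  then show ?thesis using t1T by blast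
qed

end


context nb begin

lemma II_quad: assumes A0: "A \<ge> 0" shows "eventually (\<lambda>t. II t \<ge> A * (T - t)^2) (at_left T)"
proof -
  obtain t1 c3 where t1: "t0 < t1" "t1 < T" and D3: "\<And>t. t \<in> {t1..<T} \<Longrightarrow> DDd t \<ge> c3 + (2/3) * UU t"
    using main_DDd by blast
  have "eventually (\<lambda>t. UU t \<ge> 3 * A - 3 / 2 * c3 \<and> t \<in> {t1<..<T}) (at_left T)"
    by (rule eventually_conj[OF UU_big eventually_at_left_real[OF t1(2)]])
  then obtain b where b: "b < T" and bP: "\<And>y. b < y \<Longrightarrow> y < T \<Longrightarrow> UU y \<ge> 3 * A - 3 / 2 * c3 \<and> y \<in> {t1<..<T}"
    unfolding eventually_at_left_field by auto
  define t2 where "t2 = (max b t1 + T) / 2"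
  have t2: "t2 < T" "t1 < t2" "b < t2" using b t1 by (auto simp: t2_def)
  have S: "s \<in> {t0..<T}" if "s \<in> {t2..<T}" for s using that t1 t2 by auto
  have "II t \<ge> A * (T - t)^2" if t: "t \<in> {t2..<T}" for t
  proof (rule convex_lower[OF t2(1) _ _ _ A0 _ II_lim t])
    show "(II has_real_derivative DD s) (at s within {t2..<T})" if "s \<in> {t2..<T}" for s
      using d_II[OF S[OF that]] by (simp add: has_real_derivative_iff_has_vector_derivative[symmetric])
        (rule DERIV_subset, use t2 t1 in auto)
    show "(DD has_real_derivative DDd s) (at s within {t2..<T})" if "s \<in> {t2..<T}" for s
      using d_DD[OF S[OF that]] by (simp add: has_real_derivative_iff_has_vector_derivative[symmetric])
        (rule DERIV_subset, use t2 t1 in auto)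
    show "DDd s \<ge> 2 * A" if s: "s \<in> {t2..<T}" for s
    proof -
      have "UU s \<ge> 3 * A - 3 / 2 * c3" using bP[of s] s t2 by auto
      moreover have "DDd s \<ge> c3 + (2/3) * UU s" using D3[of s] s t2 by auto
      ultimately show ?thesis by linarith
    qed
    show "II s \<ge> 0" for s by (rule II_nonneg)
  qed
  then show ?thesis unfolding eventually_at_left_field using t2 by (intro exI[of _ t2]) auto
qed

lemma c_bound: "\<exists>B. eventually (\<lambda>t. norm (c t - LG) \<le> B * (T - t)) (at_left T)"
proof -
  obtain b where b: "b < T" and bP: "\<And>y. b < y \<Longrightarrow> y < T \<Longrightarrow> sep y"
    using sep_ev unfolding eventually_at_left_field by auto
  define t1 where "t1 = (max b t0 + T) / 2"
  have t1: "t1 < T" "t0 < t1" "b < t1" using b t0T by (auto simp: t1_def)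
  have S: "s \<in> {t0..<T}" "sep s" if "s \<in> {t1..<T}" for s using that t1 bP by auto
  define Bc where "Bc = msum / dl^2"
  have cvb: "norm (cv t - cv t1) \<le> Bc * \<bar>t - t1\<bar>" if t: "t \<in> {t1..<T}" for t
  proof (rule vd_bound[of "{t1..<T}"])
    show "(cv has_vector_derivative ca s) (at s within {t1..<T})" if "s \<in> {t1..<T}" for s
      by (rule has_vector_derivative_within_subset[OF d_cv[OF S(1)[OF that]]]) (use t1 in auto)
    show "norm (ca s) \<le> Bc" if "s \<in> {t1..<T}" for s
      unfolding Bc_def by (rule ca_bound[OF S[OF that]])
  qed (use t t1 in auto)
  define Bv where "Bv = norm (cv t1) + Bc * (T - t1)"
  have cvb2: "norm (cv t) \<le> Bv" if t: "t \<in> {t1..<T}" for t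
  proof -
    have "norm (cv t) \<le> norm (cv t1) + norm (cv t - cv t1)" by (metis norm_triangle_sub add.commute)
    also have "norm (cv t - cv t1) \<le> Bc * (T - t1)"
    proof -
      have "Bc \<ge> 0" unfolding Bc_def using msum_nonneg by simp
      then have "Bc * \<bar>t - t1\<bar> \<le> Bc * (T - t1)" using t by (intro mult_left_mono) auto
      then show ?thesis using cvb[OF t] by linarith
    qed
    finally show ?thesis by (simp add: Bv_def)
  qed
  have cb: "norm (c t - LG) \<le> Bv * (T - t)" if t: "t \<in> {t1..<T}" for t
  proof -
    have ev: "eventually (\<lambda>s. norm (c s - c t) \<le> Bv * (s - t)) (at_left T)"
    proof -
      have "eventually (\<lambda>s. s \<in> {t<..<T}) (at_left T)" using t by (intro eventually_at_left_real) auto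
      then show ?thesis
      proof (rule eventually_mono)
        fix s assume s: "s \<in> {t<..<T}"
        have "norm (c s - c t) \<le> Bv * \<bar>s - t\<bar>"
        proof (rule vd_bound[of "{t1..<T}"])
          show "(c has_vector_derivative cv u) (at u within {t1..<T})" if "u \<in> {t1..<T}" for u
            by (rule has_vector_derivative_within_subset[OF d_c[OF S(1)[OF that]]]) (use t1 in auto)
          show "norm (cv u) \<le> Bv" if "u \<in> {t1..<T}" for u by (rule cvb2[OF that])
        qed (use t s in auto)
        then show "norm (c s - c t) \<le> Bv * (s - t)" using s by simp
      qed
    qed
    have l1: "((\<lambda>s. norm (c s - c t)) \<longlongrightarrow> norm (LG - c t)) (at_left T)"
      by (intro tendsto_intros c_lim)
    have l2: "((\<lambda>s. Bv * (s - t)) \<longlongrightarrow> Bv * (T - t)) (at_left T)"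
      by (intro tendsto_intros)
    have "norm (LG - c t) \<le> Bv * (T - t)"
      using tendsto_le[OF _ l2 l1 ev] by (simp add: trivial_limit_at_left_real)
    then show ?thesis by (simp add: norm_minus_commute)
  qed
  have "eventually (\<lambda>t. norm (c t - LG) \<le> Bv * (T - t)) (at_left T)"
    unfolding eventually_at_left_field using t1 cb by (intro exI[of _ t1]) auto
  then show ?thesis by blast
qed

lemma r_eq: "cluster_r m G (q t) = sqrt (II t)"
  by (simp add: cluster_r_def II_def x_def c_def power2_norm_eq_inner)

lemma J_eq: "cluster_J m G L (q t) = II t + M * (norm (c t - LG))^2"
proof -
  have "cluster_J m G L (q t) = (\<Sum>i\<in>G. m i * ((x t i + (c t - LG)) \<bullet> (x t i + (c t - LG))))"
    unfolding cluster_J_def by (intro sum.cong refl) (simp add: Gin x_def power2_norm_eq_inner)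
  also have "\<dots> = (\<Sum>i\<in>G. m i * (x t i \<bullet> x t i) + 2 * (m i * (x t i \<bullet> (c t - LG)))
      + m i * ((c t - LG) \<bullet> (c t - LG)))"
    by (intro sum.cong refl) (simp add: inner_add_left inner_add_right inner_commute algebra_simps)
  also have "\<dots> = (\<Sum>i\<in>G. m i * (x t i \<bullet> x t i)) + 2 * (\<Sum>i\<in>G. m i * (x t i \<bullet> (c t - LG)))
      + (\<Sum>i\<in>G. m i) * ((c t - LG) \<bullet> (c t - LG))"
    by (simp add: sum.distrib sum_distrib_left sum_distrib_right)
  also have "(\<Sum>i\<in>G. m i * (x t i \<bullet> (c t - LG))) = 0" by (rule sum_inner_zero[OF sum_mx])
  finally show ?thesis by (simp add: II_def M_def power2_norm_eq_inner)
qed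

lemma final: "((\<lambda>t. cluster_r m G (q t) / sqrt (cluster_J m G L (q t))) \<longlongrightarrow> 1) (at_left T)"
proof -
  define rho where "rho t = M * (norm (c t - LG))^2 / II t" for t
  obtain B where B: "eventually (\<lambda>t. norm (c t - LG) \<le> B * (T - t)) (at_left T)" using c_bound by blast
  have evS: "eventually (\<lambda>t. t \<in> {t0<..<T}) (at_left T)" using t0T by (intro eventually_at_left_real)
  have rho_lim: "(rho \<longlongrightarrow> 0) (at_left T)"
  proof (rule order_tendstoI)
    fix a :: real assume a: "a < 0"
    from evS show "eventually (\<lambda>t. a < rho t) (at_left T)"
    proof (rule eventually_mono)
      fix t assume "t \<in> {t0<..<T}"
      then have "II t > 0" using II_pos by auto
      then have "rho t \<ge> 0" unfolding rho_def using Mpos by simp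
      then show "a < rho t" using a by simp
    qed
  next
    fix \<epsilon> :: real assume e: "0 < \<epsilon>"
    define A where "A = M * B^2 / \<epsilon> + 1"
    have "M * B^2 / \<epsilon> \<ge> 0" using Mpos e by simp
    then have A0: "A > 0" unfolding A_def by linarith
    from evS B II_quad[OF less_imp_le[OF A0]] show "eventually (\<lambda>t. rho t < \<epsilon>) (at_left T)"
    proof eventually_elim
      case (elim t)
      have Ip: "II t > 0" using II_pos elim(1) by auto
      have Tt: "T - t > 0" using elim(1) by auto
      have "0 \<le> norm (c t - LG)" by simp
      then have "(norm (c t - LG))^2 \<le> (B * (T - t))^2" using elim(2) by (intro power_mono) auto
      then have "M * (norm (c t - LG))^2 \<le> M * (B^2 * (T - t)^2)" using Mpos by (simp add: power_mult_distrib)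
      moreover have "A * (T - t)^2 > 0" using A0 Tt by simp
      ultimately have "rho t \<le> M * (B^2 * (T - t)^2) / (A * (T - t)^2)"
        unfolding rho_def using elim(3) Ip Mpos by (intro frac_le) auto
      also have "\<dots> = M * B^2 / A" using Tt by (simp add: field_simps)
      also have "\<dots> < \<epsilon>"
      proof -
        have "M * B^2 < \<epsilon> * A" unfolding A_def using e by (simp add: field_simps)
        then show ?thesis using A0 by (simp add: field_simps)
      qed
      finally show ?case .
    qed
  qed
  have "((\<lambda>t. sqrt (1 / (1 + rho t))) \<longlongrightarrow> sqrt (1 / (1 + 0))) (at_left T)"
    by (intro tendsto_intros rho_lim) simp
  then have l: "((\<lambda>t. sqrt (1 / (1 + rho t))) \<longlongrightarrow> 1) (at_left T)" by simp
  have evq: "eventually (\<lambda>t. sqrt (1 / (1 + rho t)) = cluster_r m G (q t) / sqrt (cluster_J m G L (q t))) (at_left T)"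
    using evS
  proof (rule eventually_mono)
    fix t assume "t \<in> {t0<..<T}"
    then have Ip: "II t > 0" using II_pos by auto
    have "1 / (1 + rho t) = II t / (II t + M * (norm (c t - LG))^2)"
      unfolding rho_def using Ip by (simp add: field_simps)
    then show "sqrt (1 / (1 + rho t)) = cluster_r m G (q t) / sqrt (cluster_J m G L (q t))"
      by (simp add: r_eq J_eq real_sqrt_divide)
  qed
  from l show ?thesis by (simp only: tendsto_cong[OF evq])
qed

end

theorem lemmaB4:
  fixes n :: nat and m :: "nat \<Rightarrow> real" and q :: "real \<Rightarrow> nat \<Rightarrow> real^'d"
    and v a :: "real \<Rightarrow> nat \<Rightarrow> real^'d" and L :: "nat \<Rightarrow> real^'d"
    and t0 T :: real and G :: "nat set" and LG :: "real^'d"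
  assumes dim: "CARD('d) = 2 \<or> CARD('d) = 3"
    and n2: "n \<ge> 2"
    and mpos: "\<And>i. i < n \<Longrightarrow> m i > 0"
    and t0T: "t0 < T"
    and vel: "\<And>i t. i < n \<Longrightarrow> t \<in> {t0..<T} \<Longrightarrow>
                 ((\<lambda>s. q s i) has_vector_derivative v t i) (at t within {t0..<T})"
    and acc: "\<And>i t. i < n \<Longrightarrow> t \<in> {t0..<T} \<Longrightarrow>
                 ((\<lambda>s. v s i) has_vector_derivative a t i) (at t within {t0..<T})"
    and newton: "\<And>i t. i < n \<Longrightarrow> t \<in> {t0..<T} \<Longrightarrow>
                 partial_grad_U n m (q t) i (m i *\<^sub>R a t i)"
    and nocoll: "\<And>i j t. i < n \<Longrightarrow> j < n \<Longrightarrow> i \<noteq> j \<Longrightarrow> t \<in> {t0..<T} \<Longrightarrow> q t i \<noteq> q t j"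
    and lim: "\<And>i. i < n \<Longrightarrow> ((\<lambda>t. q t i) \<longlongrightarrow> L i) (at_left T)"
    and Gsub: "G \<subseteq> {..<n}" and Gcard: "card G \<ge> 2"
    and Gin: "\<And>i. i \<in> G \<Longrightarrow> L i = LG"
    and Gout: "\<And>j. j < n \<Longrightarrow> j \<notin> G \<Longrightarrow> L j \<noteq> LG"
  shows "((\<lambda>t. cluster_r m G (q t) / sqrt (cluster_J m G L (q t))) \<longlongrightarrow> 1) (at_left T)"
proof -
  interpret nb n m q v a L t0 T G LG
    by (rule nb.intro[OF mpos t0T vel acc newton nocoll lim Gsub Gcard Gin Gout])
  show ?thesis by (rule final)
qed

end
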